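(* Let $X$ be an integral regular projective curve of genus $g$ over $\mathbb{F}_q$ and $\mathbf{n}_m=(n_0,\dots,n_m)$ ($m\ge0$) a tuple of positive integers; put $\mathbf{n}_m+1:=(n_0,\dots,n_{m-1},n_m+1)$. Then $$\alpha^{(\mathbf{n}_m+1)}_X(0)=q_{\mathbf{n}_{m-1}}^{\,n_m(g-1)}\,\alpha^{(\mathbf{n}_{m-1})}_X(0)\cdot\beta_{X;\mathbf{n}_m}.$$
   Context: Let $\zeta_X(s)=\sum_{D\ge 0}N(D)^{-s}$ be the Artin zeta function of $X$ ($D$ running over effective divisors) and $\widehat\zeta_X(s)=q^{s(g-1)}\zeta_X(s)$ the complete Artin zeta function, a rational function of $q^{-s}$. Derived zeta functions are defined recursively. For the empty tuple $\mathbf{n}_{-1}=()$ put $q_{\mathbf{n}_{-1}}=q$, $T_{\mathbf{n}_{-1}}=q^{-s}$, $\widehat\zeta^{(\mathbf{n}_{-1})}_X=\widehat\zeta_X$. For a tuple $\mathbf{n}_m=(n_0,\dots,n_m)$ of positive integers ($m\ge 0$) put $\mathbf{n}_{m-1}=(n_0,\dots,n_{m-1})$, $q_{\mathbf{n}_m}=q^{n_0n_1\cdots n_m}$, $T_{\mathbf{n}_m}=q^{-n_0n_1\cdots n_m s}$. Writing $\widehat Z^{(\mathbf{n}_{m-1})}_X(T_{\mathbf{n}_{m-1}}):=\widehat\zeta^{(\mathbf{n}_{m-1})}_X(s)$ (a rational function of $T_{\mathbf{n}_{m-1}}$), set $\widehat\zeta^{(\mathbf{n}_{m-1})}_X(1):=\operatorname{Res}_{T_{\mathbf{n}_{m-1}}=1}\widehat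 Z^{(\mathbf{n}_{m-1})}_X(T_{\mathbf{n}_{m-1}})$ and for integers $N\ge 1$, $\widehat v_N:=\prod_{k=1}^{N}\widehat\zeta^{(\mathbf{n}_{m-1})}_X(k)$. Then $$\widehat\zeta^{(\mathbf{n}_m)}_X(s)=q_{\mathbf{n}_{m-1}}^{\binom{n_m}{2}(g-1)}\sum_{a=1}^{n_m}\Biggl(\sum_{\substack{k_1,\dots,k_p>0\\k_1+\cdots+k_p=n_m-a}}\frac{\widehat v_{k_1}\cdots\widehat v_{k_p}}{\prod_{j=1}^{p-1}(1-q_{\mathbf{n}_{m-1}}^{k_j+k_{j+1}})}\cdot\frac{1}{1-q_{\mathbf{n}_{m-1}}^{n_ms-n_m+a+k_p}}\Biggr)\widehat\zeta^{(\mathbf{n}_{m-1})}_X(n_ms-n_m+a)\Biggl(\sum_{\substack{l_1,\dots,l_r>0\\l_1+\cdots+l_r=a-1}}\frac{1}{1-q_{\mathbf{n}_{m-1}}^{-n_ms+n_m-a+1+l_1}}\cdot\frac{\widehat v_{l_1}\cdots\widehat v_{l_r}}{\prod_{j=1}^{r-1}(1-q_{\mathbf{n}_{m-1}}^{l_j+l_{j+1}})}\Biggr),$$ where the inner sums run over ordered tuples of positive integers (of any length) with the indicated sum, and an inner sum over tuples summing to $0$ is defined to be $1$. One writes $\widehat Z^{(\mathbf{n}_m)}_X(T_{\mathbf{n}_m}):=\widehat\zeta^{(\mathbf{n}_m)}_X(s)$, a rational function of $T_{\mathbf{n}_m}$. (For $m=0$ this is the $\mathrm{SL}_{n_0}$-zeta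 function of $X$, which coincides with the rank $n_0$ non-abelian zeta function.) For any tuple $\mathbf{n}$ (including the empty one), $(1-T_{\mathbf{n}})(1-q_{\mathbf{n}}T_{\mathbf{n}})T_{\mathbf{n}}^{g-1}\widehat Z^{(\mathbf{n})}_X(T_{\mathbf{n}})$ is a polynomial in $T_{\mathbf{n}}$, and the alpha invariant $\alpha^{(\mathbf{n})}_X(0)$ is its constant term. The beta invariant is $\beta_{X;\mathbf{n}_m}:=\operatorname{Res}_{T_{\mathbf{n}_m}=1}\widehat Z^{(\mathbf{n}_m)}_X(T_{\mathbf{n}_m})$. *)

theory Defs
  imports "HOL-Complex_Analysis.Complex_Analysis" "HOL-Computational_Algebra.Polynomial"
begin

text \<open>Zeta-function data of an integral regular projective curve X of genus g over F_q:
  by the rationality theorem Z_X(T) = P(T) / ((1-T)(1-qT)) with P an integer polynomial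
  of degree 2g, P(0) = 1, satisfying the functional equation
  P(T) = q^g T^(2g) P(1/(qT)), i.e. coeff P (2g - i) = q^(g-i) coeff P i.\<close>
definition curve_zeta_data :: "nat \<Rightarrow> nat \<Rightarrow> int poly \<Rightarrow> bool" where
  "curve_zeta_data q g P \<longleftrightarrow>
     (\<exists>p r. prime p \<and> r > 0 \<and> q = p ^ r) \<and>
     degree P = 2 * g \<and> coeff P 0 = 1 \<and>
     (\<forall>i\<le>g. coeff P (2 * g - i) = int q ^ (g - i) * coeff P i)"

text \<open>Complete Artin zeta function as a function of T = q^(-s):
  Zhat(T) = T^(-(g-1)) Z(T).\<close>
definition complete_zeta :: "nat \<Rightarrow> nat \<Rightarrow> int poly \<Rightarrow> complex \<Rightarrow> complex" where
  "complete_zeta q g P T =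
     T powi (1 - int g) * poly (map_poly of_int P) T / ((1 - T) * (1 - of_nat q * T))"

text \<open>zeta(k) for a derived zeta function given as a rational function Z of
  T = Q^(-s): the residue at T = 1 for k = 1, the value at T = Q^(-k) otherwise
  (taken as a limit, so as to be insensitive to removable singularities).\<close>
definition zeta_val :: "nat \<Rightarrow> (complex \<Rightarrow> complex) \<Rightarrow> nat \<Rightarrow> complex" where
  "zeta_val Q Z k = (if k = 1 then residue Z 1 else Lim (at (of_nat Q powi (- int k))) Z)"

definition vhat :: "nat \<Rightarrow> (complex \<Rightarrow> complex) \<Rightarrow> nat \<Rightarrow> complex" where
  "vhat Q Z N = (\<Prod>k=1..N. zeta_val Q Z k)"

definition compositions :: "nat \<Rightarrow> nat list set" where
  "compositions N = {ks. 0 \<notin> set ks \<and> sum_list ks = N}"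

definition comp_coeff :: "nat \<Rightarrow> (complex \<Rightarrow> complex) \<Rightarrow> nat list \<Rightarrow> complex" where
  "comp_coeff Q Z ks =
     (\<Prod>k\<leftarrow>ks. vhat Q Z k) /
     (\<Prod>j<length ks - 1. (1 - of_nat Q ^ (ks ! j + ks ! Suc j)))"

text \<open>One derivation step: from the derived zeta function Z (in the variable
  T' = Q^(-s), Q = q_(n_(m-1))) to the next one, in the variable T = Q^(-n s).
  Here Q^(n s) = 1/T and Q^(-(n s - n + a)) = T Q^(n-a).\<close>
definition derive_zeta :: "nat \<Rightarrow> nat \<Rightarrow> nat \<Rightarrow> (complex \<Rightarrow> complex) \<Rightarrow> complex \<Rightarrow> complex" where
  "derive_zeta Q g n Z T =
     of_nat Q powi (int (n choose 2) * (int g - 1)) *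
     (\<Sum>a=1..n.
        (if n - a = 0 then 1 else
           (\<Sum>ks\<in>compositions (n - a).
              comp_coeff Q Z ks * (1 / (1 - of_nat Q powi (int a + int (last ks) - int n) / T))))
        * Z (T * of_nat Q ^ (n - a))
        * (if a - 1 = 0 then 1 else
           (\<Sum>ls\<in>compositions (a - 1).
              (1 / (1 - T * of_nat Q ^ (n - a + 1 + hd ls))) * comp_coeff Q Z ls)))"

definition q_tuple :: "nat \<Rightarrow> nat list \<Rightarrow> nat" where
  "q_tuple q ns = q ^ prod_list ns"

fun derived_zeta_rev :: "nat \<Rightarrow> nat \<Rightarrow> int poly \<Rightarrow> nat list \<Rightarrow> complex \<Rightarrow> complex" where
  "derived_zeta_rev q g P [] = complete_zeta q g P"
| "derived_zeta_rev q g P (n # ns) =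
     derive_zeta (q_tuple q (rev ns)) g n (derived_zeta_rev q g P ns)"

definition derived_zeta :: "nat \<Rightarrow> nat \<Rightarrow> int poly \<Rightarrow> nat list \<Rightarrow> complex \<Rightarrow> complex" where
  "derived_zeta q g P ns = derived_zeta_rev q g P (rev ns)"

definition alpha_inv :: "nat \<Rightarrow> nat \<Rightarrow> int poly \<Rightarrow> nat list \<Rightarrow> complex" where
  "alpha_inv q g P ns =
     coeff (THE p. \<forall>\<^sub>F T in cofinite.
        poly p T = (1 - T) * (1 - of_nat (q_tuple q ns) * T) * T powi (int g - 1)
                   * derived_zeta q g P ns T) 0"

definition beta_inv :: "nat \<Rightarrow> nat \<Rightarrow> int poly \<Rightarrow> nat list \<Rightarrow> complex" where
  "beta_inv q g P ns = residue (derived_zeta q g P ns) 1"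

end

theory Submission
  imports Defs
begin

section \<open>Compositions\<close>

lemma comp_0: "compositions 0 = {[]}"
proof
  show "compositions 0 \<subseteq> {[]}"
  proof
    fix x assume "x \<in> compositions 0"
    hence "0 \<notin> set x" "sum_list x = 0" by (auto simp: compositions_def)
    thus "x \<in> {[]}" by (cases x) auto
  qed
qed (auto simp: compositions_def)

lemma finite_comp: "finite (compositions N)"
proof -
  have "compositions N \<subseteq> {xs. set xs \<subseteq> {0..N} \<and> length xs \<le> N}"
  proof
    fix ks assume "ks \<in> compositions N"
    hence k: "0 \<notin> set ks" "sum_list ks = N" by (auto simp: compositions_def)
    have "set ks \<subseteq> {0..N}" using k member_le_sum_list by fastforce
    moreover have "length ks \<le> sum_list ks" using k(1)
      by (induction ks) (auto simp: Suc_le_eq)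
    ultimately show "ks \<in> {xs. set xs \<subseteq> {0..N} \<and> length xs \<le> N}" using k by auto
  qed
  thus ?thesis by (rule finite_subset) (rule finite_lists_length_le, simp)
qed

lemma comp_ne: "N > 0 \<Longrightarrow> ks \<in> compositions N \<Longrightarrow> ks \<noteq> []"
  by (auto simp: compositions_def)

lemma comp_Cons_iff: "(j # ls \<in> compositions N) \<longleftrightarrow> j > 0 \<and> j \<le> N \<and> ls \<in> compositions (N - j)"
  by (auto simp: compositions_def)

lemma comp_snoc_iff: "(ls @ [j] \<in> compositions N) \<longleftrightarrow> j > 0 \<and> j \<le> N \<and> ls \<in> compositions (N - j)"
  by (auto simp: compositions_def)

lemma comp_rev_iff: "rev ks \<in> compositions N \<longleftrightarrow> ks \<in> compositions N"
  by (auto simp: compositions_def sum_list_rev)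

lemma sum_comp_rev: "(\<Sum>ks\<in>compositions N. f ks) = (\<Sum>ks\<in>compositions N. f (rev ks))"
proof (rule sum.reindex_bij_betw[symmetric])
  show "bij_betw rev (compositions N) (compositions N)"
    by (rule bij_betw_byWitness[where f'=rev]) (auto simp: comp_rev_iff)
qed

lemma sum_comp_hd_fix:
  assumes "0 < j" "j \<le> N"
  shows "(\<Sum>ks\<in>{ks\<in>compositions N. hd ks = j}. f ks) = (\<Sum>ls\<in>compositions (N - j). f (j # ls))"
proof (rule sum.reindex_bij_betw[symmetric])
  show "bij_betw (\<lambda>ls. j # ls) (compositions (N - j)) {ks \<in> compositions N. hd ks = j}"
  proof (rule bij_betw_byWitness[where f'=tl])
    show "\<forall>a\<in>compositions (N - j). tl (j # a) = a" by simp
    show "\<forall>b\<in>{ks \<in> compositions N. hd ks = j}. j # tl b = b"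
    proof
      fix b assume b: "b \<in> {ks \<in> compositions N. hd ks = j}"
      hence "b \<noteq> []" using assms comp_ne[of N b] by auto
      thus "j # tl b = b" using b by (metis (mono_tags, lifting) list.collapse mem_Collect_eq)
    qed
    show "(\<lambda>ls. j # ls) ` compositions (N - j) \<subseteq> {ks \<in> compositions N. hd ks = j}"
      using assms by (auto simp: comp_Cons_iff)
    show "tl ` {ks \<in> compositions N. hd ks = j} \<subseteq> compositions (N - j)"
    proof
      fix x assume "x \<in> tl ` {ks \<in> compositions N. hd ks = j}"
      then obtain ks where ks: "ks \<in> compositions N" "hd ks = j" "x = tl ks" by auto
      have "ks \<noteq> []" using ks assms by (auto simp: compositions_def)
      hence "ks = j # x" using ks by (metis list.collapse)
      thus "x \<in> compositions (N - j)" using ks comp_Cons_iff by metis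
    qed
  qed
qed

lemma sum_comp_last_fix:
  assumes "0 < j" "j \<le> N"
  shows "(\<Sum>ks\<in>{ks\<in>compositions N. last ks = j}. f ks) = (\<Sum>ls\<in>compositions (N - j). f (ls @ [j]))"
proof (rule sum.reindex_bij_betw[symmetric])
  show "bij_betw (\<lambda>ls. ls @ [j]) (compositions (N - j)) {ks \<in> compositions N. last ks = j}"
  proof (rule bij_betw_byWitness[where f'=butlast])
    show "\<forall>a\<in>compositions (N - j). butlast (a @ [j]) = a" by simp
    show "\<forall>b\<in>{ks \<in> compositions N. last ks = j}. butlast b @ [j] = b"
    proof
      fix b assume b: "b \<in> {ks \<in> compositions N. last ks = j}"
      hence "b \<noteq> []" using assms comp_ne[of N b] by auto
      thus "butlast b @ [j] = b" using b by (metis (mono_tags, lifting) append_butlast_last_id mem_Collect_eq)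
    qed
    show "(\<lambda>ls. ls @ [j]) ` compositions (N - j) \<subseteq> {ks \<in> compositions N. last ks = j}"
      using assms by (auto simp: comp_snoc_iff)
    show "butlast ` {ks \<in> compositions N. last ks = j} \<subseteq> compositions (N - j)"
    proof
      fix x assume "x \<in> butlast ` {ks \<in> compositions N. last ks = j}"
      then obtain ks where ks: "ks \<in> compositions N" "last ks = j" "x = butlast ks" by auto
      have "ks \<noteq> []" using ks assms by (auto simp: compositions_def)
      hence "ks = x @ [j]" using ks by (metis append_butlast_last_id)
      thus "x \<in> compositions (N - j)" using ks comp_snoc_iff by metis
    qed
  qed
qed

lemma comp_hd_range: "N > 0 \<Longrightarrow> ks \<in> compositions N \<Longrightarrow> hd ks \<in> {1..N}"
  apply (cases ks) apply (auto simp: compositions_def) done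

lemma comp_last_range: "N > 0 \<Longrightarrow> ks \<in> compositions N \<Longrightarrow> last ks \<in> {1..N}"
  using comp_hd_range[of N "rev ks"] by (simp add: comp_rev_iff hd_rev)

lemma sum_comp_hd:
  assumes "N > 0"
  shows "(\<Sum>ks\<in>compositions N. f ks) = (\<Sum>j=1..N. \<Sum>ls\<in>compositions (N - j). f (j # ls))"
proof -
  have "(\<Sum>ks\<in>compositions N. f ks) = (\<Sum>j=1..N. \<Sum>ks\<in>{ks\<in>compositions N. hd ks = j}. f ks)"
    by (rule sum.group[symmetric]) (use assms comp_hd_range finite_comp in auto)
  also have "\<dots> = (\<Sum>j=1..N. \<Sum>ls\<in>compositions (N - j). f (j # ls))"
    by (rule sum.cong) (auto intro: sum_comp_hd_fix)
  finally show ?thesis .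
qed

lemma sum_comp_last:
  assumes "N > 0"
  shows "(\<Sum>ks\<in>compositions N. f ks) = (\<Sum>j=1..N. \<Sum>ls\<in>compositions (N - j). f (ls @ [j]))"
proof -
  have "(\<Sum>ks\<in>compositions N. f ks) = (\<Sum>j=1..N. \<Sum>ks\<in>{ks\<in>compositions N. last ks = j}. f ks)"
    by (rule sum.group[symmetric]) (use assms comp_last_range finite_comp in auto)
  also have "\<dots> = (\<Sum>j=1..N. \<Sum>ls\<in>compositions (N - j). f (ls @ [j]))"
    by (rule sum.cong) (auto intro: sum_comp_last_fix)
  finally show ?thesis .
qed

lemma cc_Nil: "comp_coeff Q Z [] = 1"
  by (simp add: comp_coeff_def)

lemma cc_single: "comp_coeff Q Z [j] = vhat Q Z j"
  by (simp add: comp_coeff_def)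

lemma cc_Cons:
  assumes "ls \<noteq> []"
  shows "comp_coeff Q Z (j # ls) = vhat Q Z j * comp_coeff Q Z ls / (1 - of_nat Q ^ (j + hd ls))"
proof -
  obtain k where k: "length ls = Suc k" using assms by (cases ls) auto
  have "(\<Prod>i<length (j # ls) - 1. (1 - (of_nat Q::complex) ^ ((j # ls) ! i + (j # ls) ! Suc i)))
      = (1 - of_nat Q ^ (j + hd ls)) * (\<Prod>i<length ls - 1. (1 - of_nat Q ^ (ls ! i + ls ! Suc i)))"
    using k assms by (simp add: prod.lessThan_Suc_shift hd_conv_nth del: prod.lessThan_Suc)
  thus ?thesis by (simp add: comp_coeff_def field_simps)
qed

lemma cc_snoc:
  assumes "ks \<noteq> []"
  shows "comp_coeff Q Z (ks @ [j]) = comp_coeff Q Z ks * vhat Q Z j / (1 - of_nat Q ^ (last ks + j))"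
proof -
  obtain k where k: "length ks = Suc k" using assms by (cases ks) auto
  have "(\<Prod>i<length (ks @ [j]) - 1. (1 - (of_nat Q::complex) ^ ((ks @ [j]) ! i + (ks @ [j]) ! Suc i)))
      = (\<Prod>i<length ks - 1. (1 - of_nat Q ^ (ks ! i + ks ! Suc i))) * (1 - of_nat Q ^ (last ks + j))"
    using k assms by (simp add: prod.lessThan_Suc nth_append last_conv_nth)
  thus ?thesis by (simp add: comp_coeff_def field_simps)
qed

lemma cc_rev: "comp_coeff Q Z (rev ks) = comp_coeff Q Z ks"
proof (induction ks)
  case Nil thus ?case by simp
next
  case (Cons j ls)
  show ?case
  proof (cases "ls = []")
    case True thus ?thesis by simp
  next
    case False
    have "comp_coeff Q Z (rev (j # ls)) = comp_coeff Q Z (rev ls @ [j])" by simp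
    also have "\<dots> = comp_coeff Q Z (rev ls) * vhat Q Z j / (1 - of_nat Q ^ (last (rev ls) + j))"
      using False by (simp add: cc_snoc)
    also have "\<dots> = comp_coeff Q Z (j # ls)"
      using False Cons.IH by (simp add: cc_Cons last_rev add.commute)
    finally show ?thesis .
  qed
qed

section \<open>Model zeta function\<close>

definition Zf :: "nat \<Rightarrow> nat \<Rightarrow> complex poly \<Rightarrow> complex \<Rightarrow> complex" where
  "Zf Q g p T = T powi (1 - int g) * poly p T / ((1 - T) * (1 - of_nat Q * T))"

definition pfe :: "nat \<Rightarrow> nat \<Rightarrow> complex poly \<Rightarrow> bool" where
  "pfe Q g p \<longleftrightarrow> (\<forall>T. T \<noteq> 0 \<longrightarrow> poly p T = of_nat Q ^ g * T ^ (2 * g) * poly p (1 / (of_nat Q * T)))"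

lemma powi_1mg: "(T::complex) \<noteq> 0 \<Longrightarrow> T powi (1 - int g) = T / T ^ g"
  by (simp add: power_int_diff)

lemma powi_gm1: "(T::complex) \<noteq> 0 \<Longrightarrow> T powi (int g - 1) = T ^ g / T"
  by (simp add: power_int_diff)

lemma Zf_alt: "T \<noteq> 0 \<Longrightarrow> Zf Q g p T = T * poly p T / (T ^ g * ((1 - T) * (1 - of_nat Q * T)))"
  by (simp add: Zf_def powi_1mg)

lemma Zf_fe:
  assumes "pfe Q g p" "Q > 0" "T \<noteq> 0"
  shows "Zf Q g p (1 / (of_nat Q * T)) = Zf Q g p T"
proof -
  define q where "q = (of_nat Q :: complex)"
  have q0: "q \<noteq> 0" using assms by (simp add: q_def)
  define x where "x = 1 / (q * T)"
  have x0: "x \<noteq> 0" using q0 assms by (simp add: x_def)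
  have px: "poly p x = poly p T / (q ^ g * T ^ (2 * g))"
  proof -
    have e: "poly p T = q ^ g * T ^ (2 * g) * poly p x"
      using assms(1,3) unfolding pfe_def q_def x_def by auto
    have "q ^ g * T ^ (2 * g) \<noteq> 0" using q0 assms(3) by simp
    thus ?thesis by (simp add: e)
  qed
  have "Zf Q g p x = x * poly p x / (x ^ g * ((1 - x) * (1 - q * x)))"
    using x0 by (simp add: Zf_alt q_def)
  also have "\<dots> = T * poly p T / (T ^ g * ((1 - T) * (1 - q * T)))"
  proof (cases "T = 1 \<or> q * T = 1")
    case True
    then show ?thesis
    proof
      assume T1: "T = 1"
      hence "1 - q * x = 0" using q0 by (simp add: x_def)
      thus ?thesis using T1 by simp
    next
      assume T1: "q * T = 1"
      hence "1 - x = 0" by (simp add: x_def)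
      thus ?thesis using T1 by simp
    qed
  next
    case False
    hence n1: "1 - T \<noteq> 0" "1 - q * T \<noteq> 0" by auto
    have n2: "1 - x \<noteq> 0" "1 - q * x \<noteq> 0" using False q0 assms(3)
      by (auto simp: x_def field_simps)
    have e1: "1 - x = (q * T - 1) / (q * T)" using q0 assms(3) by (simp add: x_def field_simps)
    have e2: "1 - q * x = (T - 1) / T" using q0 assms(3) by (simp add: x_def field_simps)
    have xg: "x ^ g = 1 / (q ^ g * T ^ g)" by (simp add: x_def power_divide power_mult_distrib)
    have T2: "T ^ (2 * g) = T ^ g * T ^ g" by (simp add: mult_2 power_add)
    have nz: "q ^ g \<noteq> 0" "T ^ g \<noteq> 0" "q * T - 1 \<noteq> 0" "T - 1 \<noteq> 0" "T \<noteq> 0" "q \<noteq> 0"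
      using q0 assms(3) n1 by (auto simp: algebra_simps)
    show ?thesis unfolding px e1 e2 xg T2 unfolding x_def using nz n1
      by (simp add: field_simps)
  qed
  also have "\<dots> = Zf Q g p T" using assms(3) by (simp add: Zf_alt q_def)
  finally show ?thesis by (simp add: x_def q_def)
qed

lemma pfe_coeffs:
  fixes c :: "nat \<Rightarrow> complex" and q :: complex
  assumes "\<forall>i\<le>g. c (2 * g - i) = q ^ (g - i) * c i"
  shows "i \<le> 2 * g \<Longrightarrow> c (2 * g - i) * q ^ i = q ^ g * c i"
proof -
  assume i: "i \<le> 2 * g"
  show ?thesis
  proof (cases "i \<le> g")
    case True
    have "c (2 * g - i) * q ^ i = q ^ (g - i) * q ^ i * c i" using assms True by simp
    also have "q ^ (g - i) * q ^ i = q ^ g" using True by (simp flip: power_add)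
    finally show ?thesis .
  next
    case False
    define i' where "i' = 2 * g - i"
    have i': "i' \<le> g" "i = 2 * g - i'" using False i by (auto simp: i'_def)
    have "c i = q ^ (g - i') * c i'" using assms i' by metis
    hence "q ^ g * c i = q ^ (g + (g - i')) * c i'" by (simp add: power_add)
    also have "g + (g - i') = i" using i' by simp
    finally show ?thesis using i' by (simp add: mult.commute)
  qed
qed

lemma pfe_base:
  assumes "curve_zeta_data q g P"
  shows "pfe q g (map_poly of_int P)"
proof -
  define p where "p = (map_poly of_int P :: complex poly)"
  have deg: "degree p = 2 * g" using assms by (simp add: p_def degree_map_poly curve_zeta_data_def)
  have cp: "coeff p i = of_int (coeff P i)" for i by (simp add: p_def coeff_map_poly)
  have sym: "\<forall>i\<le>g. coeff p (2 * g - i) = (of_nat q) ^ (g - i) * coeff p i"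
    using assms by (simp add: cp curve_zeta_data_def)
  have key: "i \<le> 2 * g \<Longrightarrow> coeff p (2 * g - i) * of_nat q ^ i = of_nat q ^ g * coeff p i" for i
    using pfe_coeffs[OF sym] by blast
  have q0: "(of_nat q :: complex) \<noteq> 0" using assms
    by (auto simp: curve_zeta_data_def prime_gt_0_nat)
  show ?thesis unfolding pfe_def p_def[symmetric]
  proof (intro allI impI)
    fix T :: complex assume T: "T \<noteq> 0"
    have "of_nat q ^ g * T ^ (2 * g) * poly p (1 / (of_nat q * T))
        = (\<Sum>i\<le>2 * g. of_nat q ^ g * T ^ (2 * g) * (coeff p i * (1 / (of_nat q * T)) ^ i))"
      by (simp add: poly_altdef deg sum_distrib_left)
    also have "\<dots> = (\<Sum>i\<le>2 * g. coeff p (2 * g - i) * T ^ (2 * g - i))"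
    proof (rule sum.cong[OF refl])
      fix i assume "i \<in> {..2 * g}"
      hence i: "i \<le> 2 * g" by simp
      have TT: "T ^ (2 * g) = T ^ (2 * g - i) * T ^ i" using i by (simp flip: power_add)
      have "of_nat q ^ g * T ^ (2 * g) * (coeff p i * (1 / (of_nat q * T)) ^ i)
          = (of_nat q ^ g * coeff p i) * T ^ (2 * g - i) * (T ^ i / (of_nat q ^ i * T ^ i))"
        unfolding TT by (simp add: power_divide power_mult_distrib)
      also have "\<dots> = coeff p (2 * g - i) * T ^ (2 * g - i)"
        unfolding key[OF i, symmetric] using q0 T by (simp add: field_simps)
      finally show "of_nat q ^ g * T ^ (2 * g) * (coeff p i * (1 / (of_nat q * T)) ^ i)
          = coeff p (2 * g - i) * T ^ (2 * g - i)" .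
    qed
    also have "\<dots> = (\<Sum>i\<le>2 * g. coeff p i * T ^ i)"
      using sum.atLeastAtMost_rev[of "\<lambda>i. coeff p i * T ^ i" 0 "2 * g"]
      by (simp add: atMost_atLeast0)
    also have "\<dots> = poly p T" by (simp add: poly_altdef deg)
    finally show "poly p T = of_nat q ^ g * T ^ (2 * g) * poly p (1 / (of_nat q * T))" by simp
  qed
qed

lemma curve_q_ge2: "curve_zeta_data q g P \<Longrightarrow> q \<ge> 2"
proof -
  assume "curve_zeta_data q g P"
  then obtain p r where pr: "prime p" "r > 0" "q = p ^ r" by (auto simp: curve_zeta_data_def)
  have "p \<ge> 2" using pr prime_ge_2_nat by blast
  moreover have "p \<le> p ^ r" using pr \<open>p \<ge> 2\<close> by (simp add: self_le_power)
  ultimately show "q \<ge> 2" using pr by simp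
qed

lemma complete_zeta_Zf: "complete_zeta q g P = Zf q g (map_poly of_int P)"
  by (simp add: fun_eq_iff complete_zeta_def Zf_def)



lemma ev_ne: "eventually (\<lambda>w::complex. w \<noteq> x) (at z)"
  by (rule eventually_neq_at_within)

lemma res_prod1:
  fixes f g h :: "complex \<Rightarrow> complex"
  assumes "((\<lambda>T. (T - c) * f T) \<longlongrightarrow> r) F" "(g \<longlongrightarrow> v) F" "(h \<longlongrightarrow> w) F"
  shows "((\<lambda>T. (T - c) * (f T * g T * h T)) \<longlongrightarrow> r * v * w) F"
proof -
  have "((\<lambda>T. ((T - c) * f T) * g T * h T) \<longlongrightarrow> r * v * w) F"
    using tendsto_mult[OF tendsto_mult[OF assms(1) assms(2)] assms(3)] by simp
  thus ?thesis by (simp add: algebra_simps)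
qed

lemma res_prod2:
  fixes f g h :: "complex \<Rightarrow> complex"
  assumes "(f \<longlongrightarrow> u) F" "((\<lambda>T. (T - c) * g T) \<longlongrightarrow> r) F" "(h \<longlongrightarrow> w) F"
  shows "((\<lambda>T. (T - c) * (f T * g T * h T)) \<longlongrightarrow> u * r * w) F"
proof -
  have "((\<lambda>T. f T * ((T - c) * g T) * h T) \<longlongrightarrow> u * r * w) F"
    using tendsto_mult[OF tendsto_mult[OF assms(1) assms(2)] assms(3)] by simp
  thus ?thesis by (simp add: algebra_simps)
qed

lemma res_prod3:
  fixes f g h :: "complex \<Rightarrow> complex"
  assumes "(f \<longlongrightarrow> u) F" "(g \<longlongrightarrow> v) F" "((\<lambda>T. (T - c) * h T) \<longlongrightarrow> r) F"
  shows "((\<lambda>T. (T - c) * (f T * g T * h T)) \<longlongrightarrow> u * v * r) F"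
proof -
  have "((\<lambda>T. f T * g T * ((T - c) * h T)) \<longlongrightarrow> u * v * r) F"
    using tendsto_mult[OF tendsto_mult[OF assms(1) assms(2)] assms(3)] by simp
  thus ?thesis by (simp add: algebra_simps)
qed

lemma alg1:
  fixes x y A K B :: complex
  assumes "y \<noteq> x"
  shows "(x - y) * (A / (K * (y - x) * B)) = - (A / (K * B))"
proof (cases "K * B = 0")
  case True thus ?thesis by auto
next
  case False
  hence "K \<noteq> 0" "B \<noteq> 0" by auto
  moreover have "y - x \<noteq> 0" using assms by simp
  ultimately show ?thesis by (simp add: field_simps)
qed

locale dz =
  fixes Q :: nat and g :: nat and p :: "complex poly" and n :: nat
  assumes Q2: "Q \<ge> 2" and n1: "n \<ge> 1" and fe: "pfe Q g p"
begin

abbreviation qq :: complex where "qq \<equiv> of_nat Q"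
abbreviation Z where "Z \<equiv> Zf Q g p"
abbreviation cc where "cc \<equiv> comp_coeff Q Z"
abbreviation vh where "vh \<equiv> vhat Q Z"
abbreviation zv where "zv \<equiv> zeta_val Q Z"

definition r1 :: complex where "r1 = - poly p 1 / (1 - qq)"

lemma qq_nz: "qq \<noteq> 0" using Q2 by simp
lemma qq_ne1: "qq \<noteq> 1" using Q2 by simp
lemma Q_pos: "Q > 0" using Q2 by simp

lemma pw_inj: "qq powi x = qq powi y \<longleftrightarrow> x = y"
proof
  assume e: "qq powi x = qq powi y"
  have "real Q powi x = real Q powi y"
    using arg_cong[OF e, of norm] by (simp add: norm_power_int)
  moreover have "1 < real Q" using Q2 by simp
  ultimately show "x = y"
    by (metis less_irrefl linorder_neqE power_int_strict_increasing)
qed simp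

lemma pw_nz: "qq powi x \<noteq> 0" using qq_nz by simp

lemma pw_mult: "qq powi x * qq powi y = qq powi (x + y)"
  using qq_nz by (simp add: power_int_add)

lemma pw_nat: "qq ^ k = qq powi int k" by simp

lemma pw_eq0: "qq powi x = 1 \<longleftrightarrow> x = 0"
  using pw_inj[of x 0] by simp

lemma pw_eqm1: "qq powi x = 1 / qq \<longleftrightarrow> x = -1"
  using pw_inj[of x "-1"] by (simp add: power_int_minus divide_inverse)

lemma Z_cont:
  assumes "c \<noteq> 0" "c \<noteq> 1" "c \<noteq> 1 / qq"
  shows "isCont Z c"
proof -
  have "1 - qq * c \<noteq> 0" using assms qq_nz by (auto simp: field_simps)
  moreover have "1 - c \<noteq> 0" using assms by auto
  ultimately show ?thesis unfolding Zf_def using assms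
    by (intro continuous_intros) auto
qed

lemma Z_holo: "Z holomorphic_on (- {0, 1, 1 / qq})"
  unfolding Zf_def
proof (intro holomorphic_intros)
  fix x assume "x \<in> - {0, 1, 1 / qq}"
  hence "1 - x \<noteq> 0" "1 - qq * x \<noteq> 0" using qq_nz by (auto simp: field_simps)
  thus "(1 - x) * (1 - qq * x) \<noteq> 0" by simp
qed auto

lemma Z_res1:
  assumes K: "K \<noteq> 0" and cK: "c * K = 1"
  shows "((\<lambda>T. (T - c) * Z (T * K)) \<longlongrightarrow> r1 / K) (at c)"
proof -
  have ev: "eventually (\<lambda>T. - ((T * K) powi (1 - int g)) * poly p (T * K) / (K * (1 - qq * (T * K)))
            = (T - c) * Z (T * K)) (at c)"
    using ev_ne[of c c]
  proof eventually_elim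
    case (elim T)
    have d: "(1 - T * K) * (1 - qq * (T * K)) = K * (c - T) * (1 - qq * (T * K))"
      using cK by (simp add: algebra_simps)
    have "(T - c) * Z (T * K) = - ((T * K) powi (1 - int g) * poly p (T * K) / (K * (1 - qq * (T * K))))"
      unfolding Zf_def d by (rule alg1) (use elim in simp)
    thus ?case by simp
  qed
  have "((\<lambda>T. - ((T * K) powi (1 - int g)) * poly p (T * K) / (K * (1 - qq * (T * K))))
        \<longlongrightarrow> - ((c * K) powi (1 - int g)) * poly p (c * K) / (K * (1 - qq * (c * K)))) (at c)"
    using K qq_ne1 cK by (intro tendsto_intros) auto
  moreover have "- ((c * K) powi (1 - int g)) * poly p (c * K) / (K * (1 - qq * (c * K))) = r1 / K"
    using cK by (simp add: r1_def)
  ultimately show ?thesis using Lim_transform_eventually[OF _ ev] by simp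
qed

lemma fe1: "poly p 1 = qq ^ g * poly p (1 / qq)"
  using fe unfolding pfe_def by (metis mult_1 mult_1_right power_one zero_neq_one)

lemma Z_resq:
  assumes K: "K \<noteq> 0" and cK: "c * K * qq = 1"
  shows "((\<lambda>T. (T - c) * Z (T * K)) \<longlongrightarrow> - r1 / (qq * K)) (at c)"
proof -
  have ev: "eventually (\<lambda>T. - ((T * K) powi (1 - int g)) * poly p (T * K) / (qq * K * (1 - T * K))
            = (T - c) * Z (T * K)) (at c)"
    using ev_ne[of c c]
  proof eventually_elim
    case (elim T)
    have d: "(1 - T * K) * (1 - qq * (T * K)) = (qq * K) * (c - T) * (1 - T * K)"
      using cK by (simp add: algebra_simps)
    have "(T - c) * Z (T * K) = - ((T * K) powi (1 - int g) * poly p (T * K) / (qq * K * (1 - T * K)))"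
      unfolding Zf_def d by (rule alg1) (use elim in simp)
    thus ?case by simp
  qed
  have cK': "c * K = 1 / qq" using cK qq_nz by (simp add: field_simps)
  have ne: "1 - c * K \<noteq> 0"
  proof
    assume "1 - c * K = 0"
    hence "c * K = 1" by simp
    thus False using cK' qq_ne1 qq_nz by simp
  qed
  have "((\<lambda>T. - ((T * K) powi (1 - int g)) * poly p (T * K) / (qq * K * (1 - T * K)))
        \<longlongrightarrow> - ((c * K) powi (1 - int g)) * poly p (c * K) / (qq * K * (1 - c * K))) (at c)"
    using K qq_nz ne cK' by (intro tendsto_intros) auto
  moreover have "- ((c * K) powi (1 - int g)) * poly p (c * K) / (qq * K * (1 - c * K)) = - r1 / (qq * K)"
  proof -
    have "(1 / qq) powi (1 - int g) * poly p (1 / qq) / (1 - 1 / qq) = r1"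
    proof -
      have a: "(1 / qq) powi (1 - int g) = (1 / qq) / (1 / qq) ^ g"
        using qq_nz by (simp add: powi_1mg)
      have b: "poly p (1 / qq) = poly p 1 / qq ^ g" using fe1 qq_nz by (simp add: field_simps)
      have c: "1 - qq \<noteq> 0" "qq - 1 \<noteq> 0" using qq_ne1 by auto
      show ?thesis unfolding a b r1_def using qq_nz c
        by (simp add: field_simps power_divide)
    qed
    moreover have "- ((1 / qq) powi (1 - int g)) * poly p (1 / qq) / (qq * K * (1 - 1 / qq))
       = - ((1 / qq) powi (1 - int g) * poly p (1 / qq) / (1 - 1 / qq)) / (qq * K)"
      by (simp add: divide_divide_eq_left ac_simps)
    ultimately show ?thesis unfolding cK' by simp
  qed
  ultimately show ?thesis using Lim_transform_eventually[OF _ ev] by simp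
qed

end



context dz begin

lemma inv_qq_far: "1 / qq \<notin> ball 1 (1/2)"
proof -
  have e: "1 - 1 / qq = of_real (1 - 1 / real Q)" by simp
  have "1 - 1 / real Q \<ge> 1/2" using Q2 by (simp add: field_simps)
  hence "norm (1 - 1 / qq) \<ge> 1/2" unfolding e norm_of_real by linarith
  thus ?thesis by (simp add: dist_norm)
qed

lemma zv1: "zv 1 = r1"
proof -
  have "zv 1 = residue Z 1" by (simp add: zeta_val_def)
  also have "\<dots> = r1"
  proof (rule residue_simple')
    show "open (ball (1::complex) (1/2))" by simp
    show "(1::complex) \<in> ball 1 (1/2)" by simp
    have "ball 1 (1/2) - {1} \<subseteq> - {0, 1, 1 / qq}" using inv_qq_far by auto
    thus "Z holomorphic_on ball 1 (1/2) - {1}" using Z_holo holomorphic_on_subset by blast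
    have "((\<lambda>T. (T - 1) * Z (T * 1)) \<longlongrightarrow> r1 / 1) (at 1)" by (rule Z_res1) auto
    thus "((\<lambda>w. Z w * (w - 1)) \<longlongrightarrow> r1) (at 1)" by (simp add: mult.commute)
  qed
  finally show ?thesis .
qed

lemma zvk:
  assumes "k \<ge> 2"
  shows "zv k = Z (qq ^ (k - 1))"
proof -
  define x where "x = qq powi (- int k)"
  have x: "x \<noteq> 0" "x \<noteq> 1" "x \<noteq> 1 / qq" unfolding x_def using assms pw_nz pw_eq0 pw_eqm1 Q_pos by auto
  have "zv k = Lim (at x) Z" using assms by (simp add: zeta_val_def x_def)
  also have "\<dots> = Z x" by (rule tendsto_Lim) (use Z_cont[OF x] isCont_def in auto)
  also have "x = 1 / (qq * qq ^ (k - 1))"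
  proof -
    have "qq * qq ^ (k - 1) = qq ^ k" using assms by (cases k) auto
    thus ?thesis unfolding x_def by (simp add: power_int_minus divide_inverse)
  qed
  also have "Z (1 / (qq * qq ^ (k - 1))) = Z (qq ^ (k - 1))"
    by (rule Zf_fe[OF fe Q_pos]) (use qq_nz in simp)
  finally show ?thesis .
qed

lemma vh0: "vh 0 = 1" by (simp add: vhat_def)
lemma vh_Suc: "vh (Suc j) = vh j * zv (Suc j)" by (simp add: vhat_def)
lemma vh1: "vh 1 = r1"
proof -
  have "vh 1 = vh 0 * zv 1" using vh_Suc[of 0] by simp
  thus ?thesis unfolding vh0 zv1 by simp
qed
lemma vh_step: "j \<ge> 1 \<Longrightarrow> vh (Suc j) = vh j * Z (qq ^ j)"
  using vh_Suc[of j] zvk[of "Suc j"] by simp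

definition L :: "nat \<Rightarrow> complex \<Rightarrow> complex" where
  "L a T = (if n - a = 0 then 1 else
           (\<Sum>ks\<in>compositions (n - a).
              comp_coeff Q Z ks * (1 / (1 - of_nat Q powi (int a + int (last ks) - int n) / T))))"

definition R :: "nat \<Rightarrow> complex \<Rightarrow> complex" where
  "R a T = (if a - 1 = 0 then 1 else
           (\<Sum>ls\<in>compositions (a - 1).
              (1 / (1 - T * of_nat Q ^ (n - a + 1 + hd ls))) * comp_coeff Q Z ls))"

definition Cn :: complex where "Cn = of_nat Q powi (int (n choose 2) * (int g - 1))"

lemma derive_eq: "derive_zeta Q g n Z T = Cn * (\<Sum>a=1..n. L a T * Z (T * qq ^ (n - a)) * R a T)"
  unfolding derive_zeta_def L_def R_def Cn_def by simp

lemma L_res: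
  assumes c: "c \<noteq> 0"
  shows "((\<lambda>T. (T - c) * L a T) \<longlongrightarrow>
     (if n - a = 0 then 0 else
        (\<Sum>ks\<in>{ks\<in>compositions (n - a). qq powi (int a + int (last ks) - int n) = c}. cc ks * c))) (at c)"
proof (cases "n - a = 0")
  case True
  have "((\<lambda>T. (T - c) * 1) \<longlongrightarrow> (c - c) * 1) (at c)" by (intro tendsto_intros)
  thus ?thesis using True by (simp add: L_def)
next
  case False
  define E where "E ks = qq powi (int a + int (last ks) - int n)" for ks
  have "((\<lambda>T. \<Sum>ks\<in>compositions (n - a). (T - c) * (cc ks * (1 / (1 - E ks / T))))
        \<longlongrightarrow> (\<Sum>ks\<in>compositions (n - a). if E ks = c then cc ks * c else 0)) (at c)"
  proof (rule tendsto_sum)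
    fix ks assume "ks \<in> compositions (n - a)"
    show "((\<lambda>T. (T - c) * (cc ks * (1 / (1 - E ks / T)))) \<longlongrightarrow> (if E ks = c then cc ks * c else 0)) (at c)"
    proof (cases "E ks = c")
      case True
      have ev: "eventually (\<lambda>T. cc ks * T = (T - c) * (cc ks * (1 / (1 - E ks / T)))) (at c)"
        using ev_ne[of c c] ev_ne[of 0 c]
      proof eventually_elim
        case (elim T)
        have "1 - c / T = (T - c) / T" using elim by (simp add: field_simps)
        thus ?case using True elim by simp
      qed
      have "((\<lambda>T. cc ks * T) \<longlongrightarrow> cc ks * c) (at c)" by (intro tendsto_intros)
      thus ?thesis using True Lim_transform_eventually[OF _ ev] by simp
    next
      case ne: False
      have "1 - E ks / c \<noteq> 0" using ne c by (simp add: field_simps)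
      hence "((\<lambda>T. (T - c) * (cc ks * (1 / (1 - E ks / T)))) \<longlongrightarrow> (c - c) * (cc ks * (1 / (1 - E ks / c)))) (at c)"
        using c by (intro tendsto_intros) auto
      thus ?thesis using ne by simp
    qed
  qed
  moreover have "(\<Sum>ks\<in>compositions (n - a). if E ks = c then cc ks * c else 0)
      = (\<Sum>ks\<in>{ks\<in>compositions (n - a). E ks = c}. cc ks * c)"
    by (simp add: sum.inter_filter[OF finite_comp])
  ultimately show ?thesis using False unfolding L_def E_def by (simp add: sum_distrib_left)
qed

lemma L_cont:
  assumes c: "c \<noteq> 0"
    and np: "n - a = 0 \<or> (\<forall>ks\<in>compositions (n - a). qq powi (int a + int (last ks) - int n) \<noteq> c)"
  shows "(L a \<longlongrightarrow> L a c) (at c)"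
proof (cases "n - a = 0")
  case True
  hence "L a = (\<lambda>_. 1)" by (simp add: L_def fun_eq_iff)
  thus ?thesis by simp
next
  case False
  have "((\<lambda>T. \<Sum>ks\<in>compositions (n - a). cc ks * (1 / (1 - qq powi (int a + int (last ks) - int n) / T)))
     \<longlongrightarrow> (\<Sum>ks\<in>compositions (n - a). cc ks * (1 / (1 - qq powi (int a + int (last ks) - int n) / c)))) (at c)"
  proof (intro tendsto_sum tendsto_intros)
    fix ks assume ks: "ks \<in> compositions (n - a)"
    show "1 - qq powi (int a + int (last ks) - int n) / c \<noteq> 0"
      using np False ks c by (auto simp: field_simps)
  qed (use c in auto)
  thus ?thesis using False unfolding L_def by simp
qed

lemma R_res:
  shows "((\<lambda>T. (T - c) * R a T) \<longlongrightarrow>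
     (if a - 1 = 0 then 0 else
        - (\<Sum>ls\<in>{ls\<in>compositions (a - 1). c * qq ^ (n - a + 1 + hd ls) = 1}. cc ls * c))) (at c)"
proof (cases "a - 1 = 0")
  case True
  have "((\<lambda>T. (T - c) * 1) \<longlongrightarrow> (c - c) * 1) (at c)" by (intro tendsto_intros)
  thus ?thesis using True by (simp add: R_def)
next
  case False
  define E where "E ls = qq ^ (n - a + 1 + hd ls)" for ls
  have "((\<lambda>T. \<Sum>ls\<in>compositions (a - 1). (T - c) * ((1 / (1 - T * E ls)) * cc ls))
        \<longlongrightarrow> (\<Sum>ls\<in>compositions (a - 1). if c * E ls = 1 then - (cc ls * c) else 0)) (at c)"
  proof (rule tendsto_sum)
    fix ls assume "ls \<in> compositions (a - 1)"
    show "((\<lambda>T. (T - c) * ((1 / (1 - T * E ls)) * cc ls)) \<longlongrightarrow> (if c * E ls = 1 then - (cc ls * c) else 0)) (at c)"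
    proof (cases "c * E ls = 1")
      case True
      have ev: "eventually (\<lambda>T. - (cc ls * c) = (T - c) * ((1 / (1 - T * E ls)) * cc ls)) (at c)"
        using ev_ne[of c c]
      proof eventually_elim
        case (elim T)
        have E0: "E ls \<noteq> 0" using True by auto
        have d: "1 - T * E ls = E ls * (c - T)" using True by (simp add: algebra_simps)
        have ct: "c - T \<noteq> 0" using elim by simp
        have "(T - c) * ((1 / (E ls * (c - T))) * cc ls) = - (cc ls / E ls)"
          using E0 ct by (simp add: field_simps)
        moreover have "c = 1 / E ls" using True E0 by (simp add: field_simps)
        ultimately show ?case unfolding d by simp
      qed
      have "((\<lambda>T. - (cc ls * c)) \<longlongrightarrow> - (cc ls * c)) (at c)" by simp
      thus ?thesis using True Lim_transform_eventually[OF _ ev] by simp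
    next
      case ne: False
      have "1 - c * E ls \<noteq> 0" using ne by simp
      hence "((\<lambda>T. (T - c) * ((1 / (1 - T * E ls)) * cc ls)) \<longlongrightarrow> (c - c) * ((1 / (1 - c * E ls)) * cc ls)) (at c)"
        by (intro tendsto_intros) auto
      thus ?thesis using ne by simp
    qed
  qed
  moreover have "(\<Sum>ls\<in>compositions (a - 1). if c * E ls = 1 then - (cc ls * c) else 0)
      = - (\<Sum>ls\<in>{ls\<in>compositions (a - 1). c * E ls = 1}. cc ls * c)"
  proof -
    have "(\<Sum>ls\<in>compositions (a - 1). if c * E ls = 1 then - (cc ls * c) else 0)
        = (\<Sum>ls\<in>compositions (a - 1). - (if c * E ls = 1 then cc ls * c else 0))"
      by (rule sum.cong) auto
    thus ?thesis by (simp add: sum_negf sum.inter_filter[OF finite_comp])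
  qed
  ultimately show ?thesis using False unfolding R_def E_def by (simp add: sum_distrib_left)
qed

lemma R_cont:
  assumes np: "a - 1 = 0 \<or> (\<forall>ls\<in>compositions (a - 1). c * qq ^ (n - a + 1 + hd ls) \<noteq> 1)"
  shows "(R a \<longlongrightarrow> R a c) (at c)"
proof (cases "a - 1 = 0")
  case True
  hence "R a = (\<lambda>_. 1)" by (simp add: R_def fun_eq_iff)
  thus ?thesis by simp
next
  case False
  have "((\<lambda>T. \<Sum>ls\<in>compositions (a - 1). (1 / (1 - T * qq ^ (n - a + 1 + hd ls))) * cc ls)
     \<longlongrightarrow> (\<Sum>ls\<in>compositions (a - 1). (1 / (1 - c * qq ^ (n - a + 1 + hd ls))) * cc ls)) (at c)"
  proof (intro tendsto_sum tendsto_intros)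
    fix ls assume ls: "ls \<in> compositions (a - 1)"
    show "1 - c * qq ^ (n - a + 1 + hd ls) \<noteq> 0" using np False ls by auto
  qed
  thus ?thesis using False unfolding R_def by simp
qed

lemma M_cont:
  assumes "K \<noteq> 0" "c * K \<noteq> 0" "c * K \<noteq> 1" "c * K \<noteq> 1 / qq"
  shows "((\<lambda>T. Z (T * K)) \<longlongrightarrow> Z (c * K)) (at c)"
proof -
  have "isCont Z (c * K)" using Z_cont assms by blast
  moreover have "((\<lambda>T. T * K) \<longlongrightarrow> c * K) (at c)" by (intro tendsto_intros)
  ultimately show ?thesis using isCont_tendsto_compose by blast
qed

end



context dz begin

definition cm :: "nat \<Rightarrow> complex" where "cm m = qq powi (- int m)"

lemma cm_nz: "cm m \<noteq> 0" using pw_nz unfolding cm_def by blast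

lemma cm_mult: "cm m * qq ^ k = qq powi (int k - int m)"
  unfolding cm_def pw_nat pw_mult by simp

definition Va :: "nat \<Rightarrow> nat \<Rightarrow> complex" where
  "Va m a = (if a + m < n then
       (\<Sum>ks\<in>{ks\<in>compositions (n - a). last ks = n - a - m}. cc ks * cm m) * Z (cm m * qq ^ (n - a)) * R a (cm m)
     else if a + m = n then L a (cm m) * (r1 * cm m) * R a (cm m)
     else if a + m = n + 1 then L a (cm m) * (- (r1 * cm m)) * R a (cm m)
     else L a (cm m) * Z (cm m * qq ^ (n - a)) *
            (- (\<Sum>ls\<in>{ls\<in>compositions (a - 1). hd ls = a + m - n - 1}. cc ls * cm m)))"

lemma term_res:
  assumes a: "1 \<le> a" "a \<le> n" and m: "m \<le> n"
  shows "((\<lambda>T. (T - cm m) * (L a T * Z (T * qq ^ (n - a)) * R a T)) \<longlongrightarrow> Va m a) (at (cm m))"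
proof -
  have K: "qq ^ (n - a) \<noteq> 0" using qq_nz by simp
  have c0: "cm m \<noteq> 0" by (rule cm_nz)
  have Lpw: "qq powi (int a + int (last ks) - int n) = cm m \<longleftrightarrow> int a + int (last ks) - int n = - int m" for ks
    unfolding cm_def pw_inj ..
  have Rpw: "cm m * qq ^ (n - a + 1 + hd ls) = 1 \<longleftrightarrow> int (n - a + 1 + hd ls) - int m = 0" for ls
    unfolding cm_mult pw_eq0 ..
  consider (A) "a + m < n" | (B) "a + m = n" | (C) "a + m = n + 1" | (D) "a + m > n + 1" by linarith
  thus ?thesis
  proof cases
    case A
    have nz: "n - a \<noteq> 0" using A by simp
    have setL: "{ks\<in>compositions (n - a). qq powi (int a + int (last ks) - int n) = cm m}
              = {ks\<in>compositions (n - a). last ks = n - a - m}"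
      unfolding Lpw using A by auto
    have l: "((\<lambda>T. (T - cm m) * L a T) \<longlongrightarrow> (\<Sum>ks\<in>{ks\<in>compositions (n - a). last ks = n - a - m}. cc ks * cm m)) (at (cm m))"
      using L_res[OF c0, of a] nz unfolding setL by simp
    have e: "cm m * qq ^ (n - a) = qq powi (int (n - a) - int m)" by (rule cm_mult)
    have mm: "((\<lambda>T. Z (T * qq ^ (n - a))) \<longlongrightarrow> Z (cm m * qq ^ (n - a))) (at (cm m))"
      by (rule M_cont[OF K]) (use A in \<open>simp_all only: e pw_nz pw_eq0 pw_eqm1\<close>, auto)
    have r: "(R a \<longlongrightarrow> R a (cm m)) (at (cm m))"
      by (rule R_cont) (unfold Rpw, use A in auto)
    show ?thesis using res_prod1[OF l mm r] A by (simp add: Va_def)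
  next
    case B
    have l: "(L a \<longlongrightarrow> L a (cm m)) (at (cm m))"
    proof (rule L_cont[OF c0])
      show "n - a = 0 \<or> (\<forall>ks\<in>compositions (n - a). qq powi (int a + int (last ks) - int n) \<noteq> cm m)"
      proof (cases "n - a = 0")
        case False
        show ?thesis
        proof (rule disjI2, intro ballI)
          fix ks assume ks: "ks \<in> compositions (n - a)"
          have "last ks \<ge> 1" using comp_last_range[OF _ ks] False by auto
          thus "qq powi (int a + int (last ks) - int n) \<noteq> cm m" unfolding Lpw using B by simp
        qed
      qed simp
    qed
    have e0: "int (n - a) - int m = 0" using B by simp
    have e: "cm m * qq ^ (n - a) = 1" unfolding cm_mult e0 by simp
    have mm: "((\<lambda>T. (T - cm m) * Z (T * qq ^ (n - a))) \<longlongrightarrow> r1 / qq ^ (n - a)) (at (cm m))"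
      by (rule Z_res1[OF K e])
    have v: "r1 / qq ^ (n - a) = r1 * cm m" using e K by (simp add: field_simps)
    have r: "(R a \<longlongrightarrow> R a (cm m)) (at (cm m))"
      by (rule R_cont) (unfold Rpw, use B in auto)
    show ?thesis using res_prod2[OF l mm r] B unfolding v by (simp add: Va_def)
  next
    case C
    have l: "(L a \<longlongrightarrow> L a (cm m)) (at (cm m))"
      by (rule L_cont[OF c0]) (use C in \<open>auto simp: Lpw\<close>)
    have e: "cm m * qq ^ (n - a) * qq = 1"
    proof -
      have e0: "int (Suc (n - a)) - int m = 0" using C a by simp
      have "cm m * qq ^ (n - a) * qq = cm m * qq ^ (Suc (n - a))" by simp
      also have "\<dots> = 1" unfolding cm_mult e0 by simp
      finally show ?thesis .
    qed
    have mm: "((\<lambda>T. (T - cm m) * Z (T * qq ^ (n - a))) \<longlongrightarrow> - r1 / (qq * qq ^ (n - a))) (at (cm m))"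
      by (rule Z_resq[OF K e])
    have v: "- r1 / (qq * qq ^ (n - a)) = - (r1 * cm m)" using e K qq_nz by (simp add: field_simps)
    have r: "(R a \<longlongrightarrow> R a (cm m)) (at (cm m))"
    proof (rule R_cont)
      show "a - 1 = 0 \<or> (\<forall>ls\<in>compositions (a - 1). cm m * qq ^ (n - a + 1 + hd ls) \<noteq> 1)"
      proof (cases "a - 1 = 0")
        case False
        show ?thesis
        proof (rule disjI2, intro ballI)
          fix ls assume ls: "ls \<in> compositions (a - 1)"
          have "hd ls \<ge> 1" using comp_hd_range[OF _ ls] False by auto
          thus "cm m * qq ^ (n - a + 1 + hd ls) \<noteq> 1" unfolding Rpw using C by simp
        qed
      qed simp
    qed
    show ?thesis using res_prod2[OF l mm r] C unfolding v by (simp add: Va_def)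
  next
    case D
    have l: "(L a \<longlongrightarrow> L a (cm m)) (at (cm m))"
      by (rule L_cont[OF c0]) (use D in \<open>auto simp: Lpw\<close>)
    have e: "cm m * qq ^ (n - a) = qq powi (int (n - a) - int m)" by (rule cm_mult)
    have mm: "((\<lambda>T. Z (T * qq ^ (n - a))) \<longlongrightarrow> Z (cm m * qq ^ (n - a))) (at (cm m))"
      by (rule M_cont[OF K]) (use D a in \<open>simp_all only: e pw_nz pw_eq0 pw_eqm1\<close>, auto)
    have a1: "a - 1 \<noteq> 0" using D m by simp
    have setR: "{ls\<in>compositions (a - 1). cm m * qq ^ (n - a + 1 + hd ls) = 1}
              = {ls\<in>compositions (a - 1). hd ls = a + m - n - 1}"
      unfolding Rpw using D a by auto
    have r: "((\<lambda>T. (T - cm m) * R a T) \<longlongrightarrow> - (\<Sum>ls\<in>{ls\<in>compositions (a - 1). hd ls = a + m - n - 1}. cc ls * cm m)) (at (cm m))"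
      using R_res[of "cm m" a] a1 unfolding setR by simp
    show ?thesis using res_prod3[OF l mm r] D by (simp add: Va_def)
  qed
qed

end



context dz begin

definition Rh :: "nat \<Rightarrow> nat \<Rightarrow> complex" where
  "Rh N h = (if N - h = 0 then 1 else (\<Sum>ls\<in>compositions (N - h). cc ls / (1 - qq ^ (h + hd ls))))"

definition Lh :: "nat \<Rightarrow> nat \<Rightarrow> complex" where
  "Lh N i = (if N - i = 0 then 1 else (\<Sum>ks\<in>compositions (N - i). cc ks / (1 - qq ^ (last ks + i))))"

lemma HD:
  assumes "1 \<le> h" "h \<le> N"
  shows "vh h * Rh N h = (\<Sum>ps\<in>{ps\<in>compositions N. hd ps = h}. cc ps)"
proof -
  have "(\<Sum>ps\<in>{ps\<in>compositions N. hd ps = h}. cc ps) = (\<Sum>ls\<in>compositions (N - h). cc (h # ls))"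
    using assms by (intro sum_comp_hd_fix) auto
  also have "\<dots> = vh h * Rh N h"
  proof (cases "N - h = 0")
    case True thus ?thesis by (simp add: Rh_def comp_0 cc_single)
  next
    case False
    have "(\<Sum>ls\<in>compositions (N - h). cc (h # ls)) = (\<Sum>ls\<in>compositions (N - h). vh h * (cc ls / (1 - qq ^ (h + hd ls))))"
    proof (rule sum.cong[OF refl])
      fix ls assume ls: "ls \<in> compositions (N - h)"
      have "ls \<noteq> []" by (rule comp_ne[OF _ ls]) (use False in simp)
      thus "cc (h # ls) = vh h * (cc ls / (1 - qq ^ (h + hd ls)))" by (simp add: cc_Cons)
    qed
    thus ?thesis using False by (simp add: Rh_def sum_distrib_left)
  qed
  finally show ?thesis ..
qed

lemma LAST:
  assumes "1 \<le> i" "i \<le> N"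
  shows "vh i * Lh N i = (\<Sum>ks\<in>{ks\<in>compositions N. last ks = i}. cc ks)"
proof -
  have "(\<Sum>ks\<in>{ks\<in>compositions N. last ks = i}. cc ks) = (\<Sum>ls\<in>compositions (N - i). cc (ls @ [i]))"
    using assms by (intro sum_comp_last_fix) auto
  also have "\<dots> = vh i * Lh N i"
  proof (cases "N - i = 0")
    case True thus ?thesis by (simp add: Lh_def comp_0 cc_single)
  next
    case False
    have "(\<Sum>ls\<in>compositions (N - i). cc (ls @ [i])) = (\<Sum>ls\<in>compositions (N - i). vh i * (cc ls / (1 - qq ^ (last ls + i))))"
    proof (rule sum.cong[OF refl])
      fix ls assume ls: "ls \<in> compositions (N - i)"
      have "ls \<noteq> []" by (rule comp_ne[OF _ ls]) (use False in simp)
      thus "cc (ls @ [i]) = vh i * (cc ls / (1 - qq ^ (last ls + i)))" by (simp add: cc_snoc)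
    qed
    thus ?thesis using False by (simp add: Lh_def sum_distrib_left)
  qed
  finally show ?thesis ..
qed

lemma R_at:
  assumes "a + m \<le> n + 1" "a \<le> n"
  shows "R a (cm m) = (if a - 1 = 0 then 1 else
           (\<Sum>ls\<in>compositions (a - 1). cc ls / (1 - qq ^ ((n + 1 - a - m) + hd ls))))"
proof -
  have "cm m * qq ^ (n - a + 1 + hd ls) = qq ^ ((n + 1 - a - m) + hd ls)" if "a - 1 \<noteq> 0" for ls
  proof -
    have "int (n - a + 1 + hd ls) - int m = int ((n + 1 - a - m) + hd ls)" using assms that by simp
    thus ?thesis unfolding cm_mult by (simp only: pw_nat)
  qed
  thus ?thesis unfolding R_def by (auto intro!: sum.cong)
qed

lemma L_at:
  assumes "n \<le> a + m"
  shows "L a (cm m) = (if n - a = 0 then 1 else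
           (\<Sum>ks\<in>compositions (n - a). cc ks / (1 - qq ^ (last ks + (a + m - n)))))"
proof -
  have "qq powi (int a + int (last ks) - int n) / cm m = qq ^ (last ks + (a + m - n))" for ks
  proof -
    have "qq powi (int a + int (last ks) - int n) / cm m = qq powi (int a + int (last ks) - int n) * qq powi (int m)"
      unfolding cm_def by (simp add: power_int_minus divide_inverse)
    also have "\<dots> = qq powi (int a + int (last ks) - int n + int m)" by (rule pw_mult)
    also have "int a + int (last ks) - int n + int m = int (last ks + (a + m - n))" using assms by simp
    finally show ?thesis by (simp only: pw_nat)
  qed
  thus ?thesis unfolding L_def by (auto intro!: sum.cong)
qed

lemma zvk':
  assumes "k \<ge> 2"
  shows "zv k = Z (qq powi (- int k))"
proof -
  define x where "x = qq powi (- int k)"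
  have x: "x \<noteq> 0" "x \<noteq> 1" "x \<noteq> 1 / qq" unfolding x_def using assms pw_nz pw_eq0 pw_eqm1 Q_pos by auto
  have "zv k = Lim (at x) Z" using assms by (simp add: zeta_val_def x_def)
  also have "\<dots> = Z x" by (rule tendsto_Lim) (use Z_cont[OF x] isCont_def in auto)
  finally show ?thesis by (simp add: x_def)
qed

end



context dz begin

lemma R_Rh:
  assumes "1 \<le> a" "a + m \<le> n" 
  shows "R a (cm m) = Rh (n - m) (n - m + 1 - a)"
proof -
  have r: "R a (cm m) = (if a - 1 = 0 then 1 else
           (\<Sum>ls\<in>compositions (a - 1). cc ls / (1 - qq ^ ((n + 1 - a - m) + hd ls))))"
    by (rule R_at) (use assms in auto)
  have e1: "n - m - (n - m + 1 - a) = a - 1" and e2: "n + 1 - a - m = n - m + 1 - a" using assms by auto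
  show ?thesis unfolding Rh_def e1 r e2 ..
qed

lemma VX:
  assumes m: "1 \<le> m" and a: "1 \<le> a" "a + m \<le> n"
  shows "Va m a = cm m * (\<Sum>ks\<in>compositions m. cc ks / (1 - qq ^ (last ks + (n - m - a))))
                        * (\<Sum>ps\<in>{ps\<in>compositions (n - m). hd ps = n - m + 1 - a}. cc ps)"
proof -
  define h where "h = n - m + 1 - a"
  have h: "1 \<le> h" "h \<le> n - m" using a by (auto simp: h_def)
  have RR: "R a (cm m) = Rh (n - m) h" unfolding h_def by (rule R_Rh) (use a in auto)
  have HH: "vh h * Rh (n - m) h = (\<Sum>ps\<in>{ps\<in>compositions (n - m). hd ps = h}. cc ps)"
    by (rule HD) (use h in auto)
  show ?thesis
  proof (cases "a + m < n")
    case True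
    define j where "j = n - a - m"
    have j: "j \<ge> 1" "Suc j = h" "n - a - j = m" "n - m - a = j" using True a by (auto simp: j_def h_def)
    have s1: "(\<Sum>ks\<in>{ks\<in>compositions (n - a). last ks = j}. cc ks) = (\<Sum>ls\<in>compositions m. cc (ls @ [j]))"
      using sum_comp_last_fix[of j "n - a" cc] j True by simp
    also have "\<dots> = (\<Sum>ls\<in>compositions m. vh j * (cc ls / (1 - qq ^ (last ls + j))))"
    proof (rule sum.cong[OF refl])
      fix ls assume ls: "ls \<in> compositions m"
      have "ls \<noteq> []" by (rule comp_ne[OF _ ls]) (use m in simp)
      thus "cc (ls @ [j]) = vh j * (cc ls / (1 - qq ^ (last ls + j)))" by (simp add: cc_snoc)
    qed
    finally have s1f: "(\<Sum>ks\<in>{ks\<in>compositions (n - a). last ks = j}. cc ks)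
       = (\<Sum>ls\<in>compositions m. vh j * (cc ls / (1 - qq ^ (last ls + j))))" .
    have s1': "(\<Sum>ks\<in>{ks\<in>compositions (n - a). last ks = j}. cc ks * cm m)
        = cm m * vh j * (\<Sum>ls\<in>compositions m. cc ls / (1 - qq ^ (last ls + j)))"
    proof -
      have "(\<Sum>ks\<in>{ks\<in>compositions (n - a). last ks = j}. cc ks * cm m)
          = (\<Sum>ks\<in>{ks\<in>compositions (n - a). last ks = j}. cc ks) * cm m"
        by (rule sum_distrib_right[symmetric])
      also have "\<dots> = (\<Sum>ls\<in>compositions m. vh j * (cc ls / (1 - qq ^ (last ls + j)))) * cm m"
        unfolding s1f ..
      also have "\<dots> = (vh j * (\<Sum>ls\<in>compositions m. cc ls / (1 - qq ^ (last ls + j)))) * cm m"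
        by (simp only: sum_distrib_left)
      also have "\<dots> = cm m * vh j * (\<Sum>ls\<in>compositions m. cc ls / (1 - qq ^ (last ls + j)))"
        by (simp only: ac_simps)
      finally show ?thesis .
    qed
    have z: "Z (cm m * qq ^ (n - a)) = Z (qq ^ j)"
    proof -
      have "int (n - a) - int m = int j" using True by (simp add: j_def)
      thus ?thesis unfolding cm_mult by (simp only: pw_nat)
    qed
    have vv: "vh j * Z (qq ^ j) = vh h" using vh_step[OF j(1)] j(2) by simp
    have "Va m a = cm m * vh j * (\<Sum>ls\<in>compositions m. cc ls / (1 - qq ^ (last ls + j))) * Z (qq ^ j) * Rh (n - m) h"
      using True unfolding Va_def j_def[symmetric] s1' z RR by simp
    also have "\<dots> = cm m * (\<Sum>ls\<in>compositions m. cc ls / (1 - qq ^ (last ls + j))) * (vh j * Z (qq ^ j) * Rh (n - m) h)"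
      by (simp add: ac_simps)
    also have "\<dots> = cm m * (\<Sum>ls\<in>compositions m. cc ls / (1 - qq ^ (last ls + j))) * (\<Sum>ps\<in>{ps\<in>compositions (n - m). hd ps = h}. cc ps)"
      unfolding vv HH ..
    finally show ?thesis unfolding h_def j(4) .
  next
    case False
    hence am: "a + m = n" using a by simp
    have hh: "h = 1" using am by (simp add: h_def)
    have LL: "L a (cm m) = (\<Sum>ks\<in>compositions m. cc ks / (1 - qq ^ (last ks + 0)))"
    proof -
      have "L a (cm m) = (if n - a = 0 then 1 else
           (\<Sum>ks\<in>compositions (n - a). cc ks / (1 - qq ^ (last ks + (a + m - n)))))"
        by (rule L_at) (use am in simp)
      moreover have "n - a = m" "a + m - n = 0" using am by auto
      ultimately show ?thesis using m by simp
    qed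
    have "Va m a = L a (cm m) * (r1 * cm m) * R a (cm m)" using am by (simp add: Va_def)
    also have "\<dots> = cm m * (\<Sum>ks\<in>compositions m. cc ks / (1 - qq ^ (last ks + 0))) * (vh 1 * Rh (n - m) 1)"
      unfolding LL RR hh vh1 by (simp add: ac_simps)
    also have "\<dots> = cm m * (\<Sum>ks\<in>compositions m. cc ks / (1 - qq ^ (last ks + 0))) * (\<Sum>ps\<in>{ps\<in>compositions (n - m). hd ps = 1}. cc ps)"
      using HH unfolding hh by simp
    moreover have e: "n - m + 1 - a = 1" "n - m - a = 0" using am by auto
    ultimately show ?thesis unfolding e by simp
  qed
qed

end



context dz begin

lemma L_Lh:
  assumes "n \<le> a + m" "a \<le> n" "a + m - n \<ge> 1"
  shows "L a (cm m) = Lh m (a + m - n)"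
proof -
  have r: "L a (cm m) = (if n - a = 0 then 1 else
           (\<Sum>ks\<in>compositions (n - a). cc ks / (1 - qq ^ (last ks + (a + m - n)))))"
    by (rule L_at) (use assms in auto)
  have e1: "m - (a + m - n) = n - a" using assms by auto
  show ?thesis unfolding Lh_def e1 r ..
qed

lemma VY:
  assumes m: "1 \<le> m" "m < n" and a: "n < a + m" "a \<le> n"
  shows "Va m a = - cm m * (\<Sum>ks\<in>{ks\<in>compositions m. last ks = a + m - n}. cc ks)
                        * (\<Sum>ps\<in>compositions (n - m). cc ps / (1 - qq ^ (hd ps + (a + m - n - 1))))"
proof -
  define i where "i = a + m - n"
  have i: "1 \<le> i" "i \<le> m" using a m by (auto simp: i_def)
  have LL: "L a (cm m) = Lh m i" unfolding i_def by (rule L_Lh) (use a in auto)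
  have LA: "vh i * Lh m i = (\<Sum>ks\<in>{ks\<in>compositions m. last ks = i}. cc ks)"
    by (rule LAST) (use i in auto)
  show ?thesis
  proof (cases "a + m = n + 1")
    case True
    have i1: "i = 1" using True by (simp add: i_def)
    have RR: "R a (cm m) = (\<Sum>ls\<in>compositions (n - m). cc ls / (1 - qq ^ (hd ls + 0)))"
    proof -
      have r: "R a (cm m) = (if a - 1 = 0 then 1 else
           (\<Sum>ls\<in>compositions (a - 1). cc ls / (1 - qq ^ ((n + 1 - a - m) + hd ls))))"
        by (rule R_at) (use True a in auto)
      have e: "a - 1 = n - m" "n + 1 - a - m = 0" using True by auto
      show ?thesis unfolding r e using m by simp
    qed
    have "Va m a = L a (cm m) * (- (r1 * cm m)) * R a (cm m)" using True by (simp add: Va_def)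
    also have "\<dots> = - cm m * (vh 1 * Lh m 1) * (\<Sum>ls\<in>compositions (n - m). cc ls / (1 - qq ^ (hd ls + 0)))"
      unfolding LL RR i1 vh1 by (simp add: ac_simps)
    finally show ?thesis using LA unfolding i1 i_def[symmetric] by simp
  next
    case False
    hence i2: "i \<ge> 2" using a by (simp add: i_def)
    have z: "Z (cm m * qq ^ (n - a)) = zv i"
    proof -
      have "int (n - a) - int m = - int i" using a by (simp add: i_def)
      thus ?thesis unfolding cm_mult using zvk'[OF i2] by simp
    qed
    have hs: "(\<Sum>ls\<in>{ls\<in>compositions (a - 1). hd ls = a + m - n - 1}. cc ls)
        = vh (i - 1) * (\<Sum>ps\<in>compositions (n - m). cc ps / (1 - qq ^ (hd ps + (i - 1))))"
    proof -
      have "(\<Sum>ls\<in>{ls\<in>compositions (a - 1). hd ls = i - 1}. cc ls)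
          = (\<Sum>ps\<in>compositions (a - 1 - (i - 1)). cc ((i - 1) # ps))"
        by (rule sum_comp_hd_fix) (use i2 a m in \<open>auto simp: i_def\<close>)
      also have "a - 1 - (i - 1) = n - m" using i2 a by (auto simp: i_def)
      also have "(\<Sum>ps\<in>compositions (n - m). cc ((i - 1) # ps))
          = (\<Sum>ps\<in>compositions (n - m). vh (i - 1) * (cc ps / (1 - qq ^ (hd ps + (i - 1)))))"
      proof (rule sum.cong[OF refl])
        fix ps assume ps: "ps \<in> compositions (n - m)"
        have "ps \<noteq> []" by (rule comp_ne[OF _ ps]) (use m in simp)
        thus "cc ((i - 1) # ps) = vh (i - 1) * (cc ps / (1 - qq ^ (hd ps + (i - 1))))"
          by (simp add: cc_Cons add.commute)
      qed
      finally show ?thesis unfolding i_def by (simp add: sum_distrib_left)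
    qed
    have vv: "vh (i - 1) * zv i = vh i" using vh_Suc[of "i - 1"] i2 by simp
    have "Va m a = Lh m i * zv i * (- (\<Sum>ls\<in>{ls\<in>compositions (a - 1). hd ls = a + m - n - 1}. cc ls * cm m))"
      using False a unfolding Va_def LL z by simp
    also have "\<dots> = Lh m i * zv i * (- ((\<Sum>ls\<in>{ls\<in>compositions (a - 1). hd ls = a + m - n - 1}. cc ls) * cm m))"
      by (simp only: sum_distrib_right)
    also have "\<dots> = - cm m * ((vh (i - 1) * zv i) * Lh m i) * (\<Sum>ps\<in>compositions (n - m). cc ps / (1 - qq ^ (hd ps + (i - 1))))"
      unfolding hs by (simp only: ac_simps mult_minus_left mult_minus_right)
    finally show ?thesis unfolding vv LA unfolding i_def .
  qed
qed

lemma V0: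
  assumes a: "1 \<le> a" "a \<le> n"
  shows "Va 0 a = (\<Sum>ps\<in>{ps\<in>compositions n. hd ps = n + 1 - a}. cc ps)"
proof -
  define h where "h = n + 1 - a"
  have h: "1 \<le> h" "h \<le> n" using a by (auto simp: h_def)
  have c0: "cm 0 = 1" by (simp add: cm_def)
  have RR: "R a 1 = Rh n h"
  proof -
    have r: "R a (cm 0) = (if a - 1 = 0 then 1 else
           (\<Sum>ls\<in>compositions (a - 1). cc ls / (1 - qq ^ ((n + 1 - a - 0) + hd ls))))"
      by (rule R_at) (use a in auto)
    have e: "n - h = a - 1" "n + 1 - a - 0 = h" using a by (auto simp: h_def)
    show ?thesis using r unfolding c0 Rh_def e .
  qed
  have HH: "vh h * Rh n h = (\<Sum>ps\<in>{ps\<in>compositions n. hd ps = h}. cc ps)"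
    by (rule HD) (use h in auto)
  show ?thesis
  proof (cases "a < n")
    case True
    define j where "j = n - a"
    have j: "j \<ge> 1" "Suc j = h" using True a by (auto simp: j_def h_def)
    have s: "(\<Sum>ks\<in>{ks\<in>compositions (n - a). last ks = n - a - 0}. cc ks * cm 0) = vh j"
    proof -
      have "(\<Sum>ks\<in>{ks\<in>compositions j. last ks = j}. cc ks) = (\<Sum>ls\<in>compositions (j - j). cc (ls @ [j]))"
        by (rule sum_comp_last_fix) (use j in auto)
      thus ?thesis unfolding c0 j_def[symmetric] by (simp add: comp_0 cc_single)
    qed
    have vv: "vh j * Z (qq ^ j) = vh h" using vh_step[OF j(1)] j(2) by simp
    have "Va 0 a = vh j * Z (qq ^ j) * R a 1"
      using True unfolding Va_def s by (simp add: c0 j_def)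
    hence "Va 0 a = vh h * Rh n h" unfolding vv RR .
    thus ?thesis unfolding HH unfolding h_def .
  next
    case False
    hence an: "a = n" using a by simp
    have hh: "h = 1" using an by (simp add: h_def)
    have "Va 0 a = L n 1 * (r1 * 1) * R n 1" using an by (simp add: Va_def c0)
    also have "L n 1 = 1" by (simp add: L_def)
    finally show ?thesis using HH RR an hh vh1 by simp
  qed
qed

end



context dz begin

definition DS :: "nat \<Rightarrow> complex" where
  "DS m = (\<Sum>ks\<in>compositions m. \<Sum>ps\<in>compositions (n - m). cc ks * cc ps / (1 - qq ^ (last ks + hd ps - 1)))"

definition S :: "nat \<Rightarrow> complex" where "S N = (\<Sum>ks\<in>compositions N. cc ks)"

lemma SX:
  assumes m: "1 \<le> m" "m < n"
  shows "(\<Sum>a=1..n-m. Va m a) = cm m * DS m"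
proof -
  define N where "N = n - m"
  define A where "A e = (\<Sum>ks\<in>compositions m. cc ks / (1 - qq ^ (last ks + e)))" for e
  define B where "B h = (\<Sum>ps\<in>{ps\<in>compositions N. hd ps = h}. cc ps)" for h
  have "(\<Sum>a=1..N. Va m a) = (\<Sum>a=1..N. cm m * A (N - a) * B (N + 1 - a))"
    by (rule sum.cong[OF refl]) (use m in \<open>auto simp: VX A_def B_def N_def\<close>)
  also have "\<dots> = (\<Sum>h=1..N. cm m * A (N - (N + 1 - h)) * B (N + 1 - (N + 1 - h)))"
    using sum.atLeastAtMost_rev[of "\<lambda>a. cm m * A (N - a) * B (N + 1 - a)" 1 N] by simp
  also have "\<dots> = (\<Sum>h=1..N. cm m * (\<Sum>ps\<in>{ps\<in>compositions N. hd ps = h}. A (hd ps - 1) * cc ps))"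
  proof (rule sum.cong[OF refl])
    fix h assume h: "h \<in> {1..N}"
    have e: "N - (N + 1 - h) = h - 1" "N + 1 - (N + 1 - h) = h" using h by auto
    show "cm m * A (N - (N + 1 - h)) * B (N + 1 - (N + 1 - h)) = cm m * (\<Sum>ps\<in>{ps\<in>compositions N. hd ps = h}. A (hd ps - 1) * cc ps)"
      unfolding e B_def by (simp add: sum_distrib_left mult.assoc)
  qed
  also have "\<dots> = cm m * (\<Sum>h=1..N. \<Sum>ps\<in>{ps\<in>compositions N. hd ps = h}. A (hd ps - 1) * cc ps)"
    by (simp add: sum_distrib_left)
  also have "(\<Sum>h=1..N. \<Sum>ps\<in>{ps\<in>compositions N. hd ps = h}. A (hd ps - 1) * cc ps)
      = (\<Sum>ps\<in>compositions N. A (hd ps - 1) * cc ps)"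
  proof (rule sum.group)
    show "hd ` compositions N \<subseteq> {1..N}" using comp_hd_range[of N] m by (auto simp: N_def)
  qed (use finite_comp in auto)
  also have "\<dots> = (\<Sum>ps\<in>compositions N. \<Sum>ks\<in>compositions m. cc ks * cc ps / (1 - qq ^ (last ks + hd ps - 1)))"
  proof (rule sum.cong[OF refl])
    fix ps assume ps: "ps \<in> compositions N"
    have "hd ps \<ge> 1" using comp_hd_range[OF _ ps] m by (auto simp: N_def)
    hence e: "last ks + (hd ps - 1) = last ks + hd ps - 1" for ks by simp
    show "A (hd ps - 1) * cc ps = (\<Sum>ks\<in>compositions m. cc ks * cc ps / (1 - qq ^ (last ks + hd ps - 1)))"
      unfolding A_def e by (simp add: sum_distrib_right)
  qed
  also have "\<dots> = DS m" unfolding DS_def N_def by (rule sum.swap)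
  finally show ?thesis by (simp add: N_def)
qed

lemma SY:
  assumes m: "1 \<le> m" "m < n"
  shows "(\<Sum>a=n-m+1..n. Va m a) = - cm m * DS m"
proof -
  define N where "N = n - m"
  define C where "C i = (\<Sum>ks\<in>{ks\<in>compositions m. last ks = i}. cc ks)" for i
  define B where "B e = (\<Sum>ps\<in>compositions N. cc ps / (1 - qq ^ (hd ps + e)))" for e
  have "(\<Sum>a=n-m+1..n. Va m a) = (\<Sum>a=1 + N..m + N. Va m a)" using m by (simp add: N_def)
  also have "\<dots> = (\<Sum>i=1..m. Va m (i + N))" by (rule sum.shift_bounds_cl_nat_ivl)
  also have "\<dots> = (\<Sum>i=1..m. - cm m * C i * B (i - 1))"
  proof (rule sum.cong[OF refl])
    fix i assume i: "i \<in> {1..m}"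
    have e: "i + N + m - n = i" using i m by (auto simp: N_def)
    show "Va m (i + N) = - cm m * C i * B (i - 1)"
      using VY[where a="i + N"] m i unfolding e C_def B_def N_def by auto
  qed
  also have "\<dots> = - cm m * (\<Sum>i=1..m. \<Sum>ks\<in>{ks\<in>compositions m. last ks = i}. cc ks * B (last ks - 1))"
    by (simp add: sum_distrib_left sum_distrib_right C_def mult.assoc)
  also have "(\<Sum>i=1..m. \<Sum>ks\<in>{ks\<in>compositions m. last ks = i}. cc ks * B (last ks - 1))
      = (\<Sum>ks\<in>compositions m. cc ks * B (last ks - 1))"
  proof (rule sum.group)
    show "last ` compositions m \<subseteq> {1..m}" using comp_last_range[of m] m by auto
  qed (use finite_comp in auto)
  also have "\<dots> = DS m"
    unfolding DS_def N_def[symmetric]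
  proof (rule sum.cong[OF refl])
    fix ks assume ks: "ks \<in> compositions m"
    have "last ks \<ge> 1" using comp_last_range[OF _ ks] m by auto
    hence e: "hd ps + (last ks - 1) = last ks + hd ps - 1" for ps by simp
    show "cc ks * B (last ks - 1) = (\<Sum>ps\<in>compositions N. cc ks * cc ps / (1 - qq ^ (last ks + hd ps - 1)))"
      unfolding B_def e by (simp add: sum_distrib_left)
  qed
  finally show ?thesis .
qed

lemma Vsum_mid:
  assumes "1 \<le> m" "m < n"
  shows "(\<Sum>a=1..n. Va m a) = 0"
proof -
  have "(\<Sum>a=1..n - m + m. Va m a) = (\<Sum>a=1..n - m. Va m a) + (\<Sum>a=n - m + 1..n - m + m. Va m a)"
    by (rule sum.ub_add_nat) simp
  also have "n - m + m = n" using assms by simp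
  finally show ?thesis using SX[OF assms] SY[OF assms] by simp
qed

lemma Vsum_0: "(\<Sum>a=1..n. Va 0 a) = S n"
proof -
  define B where "B h = (\<Sum>ps\<in>{ps\<in>compositions n. hd ps = h}. cc ps)" for h
  have "(\<Sum>a=1..n. Va 0 a) = (\<Sum>a=1..n. B (n + 1 - a))"
    by (rule sum.cong[OF refl]) (auto simp: V0 B_def)
  also have "\<dots> = (\<Sum>h=1..n. B (n + 1 - (n + 1 - h)))"
    using sum.atLeastAtMost_rev[of "\<lambda>a. B (n + 1 - a)" 1 n] by simp
  also have "\<dots> = (\<Sum>h=1..n. B h)" by (rule sum.cong) auto
  also have "\<dots> = S n" unfolding B_def S_def
  proof (rule sum.group)
    show "hd ` compositions n \<subseteq> {1..n}" using comp_hd_range[of n] n1 by auto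
  qed (use finite_comp in auto)
  finally show ?thesis .
qed

end



context dz begin

abbreviation D where "D \<equiv> derive_zeta Q g n Z"

lemma D_res:
  assumes m: "m \<le> n"
  shows "((\<lambda>T. (T - cm m) * D T) \<longlongrightarrow> Cn * (\<Sum>a=1..n. Va m a)) (at (cm m))"
proof -
  have "((\<lambda>T. Cn * (\<Sum>a=1..n. (T - cm m) * (L a T * Z (T * qq ^ (n - a)) * R a T)))
        \<longlongrightarrow> Cn * (\<Sum>a=1..n. Va m a)) (at (cm m))"
    by (intro tendsto_mult_left tendsto_sum term_res) (use m in auto)
  moreover have "(\<lambda>T. (T - cm m) * D T) = (\<lambda>T. Cn * (\<Sum>a=1..n. (T - cm m) * (L a T * Z (T * qq ^ (n - a)) * R a T)))"
    by (simp add: fun_eq_iff derive_eq sum_distrib_left ac_simps)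
  ultimately show ?thesis by simp
qed

lemma L_fe:
  assumes T: "T \<noteq> 0" and a: "1 \<le> a" "a \<le> n"
  shows "L a (1 / (qq ^ n * T)) = R (n + 1 - a) T"
proof -
  have e1: "n + 1 - a - 1 = n - a" using a by simp
  have e2: "n - (n + 1 - a) + 1 + h = a + h" for h using a by simp
  have pw1: "qq powi (int a + int l - int n) / (1 / (qq ^ n * T)) = T * qq ^ (a + l)" for l
  proof -
    have "qq powi (int a + int l - int n) / (1 / (qq ^ n * T)) = T * (qq powi (int a + int l - int n) * qq ^ n)"
      by simp
    also have "qq powi (int a + int l - int n) * qq ^ n = qq powi (int a + int l - int n) * qq powi (int n)"
      by simp
    also have "\<dots> = qq powi (int a + int l - int n + int n)" by (rule pw_mult)
    also have "\<dots> = qq powi (int (a + l))" by simp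
    also have "\<dots> = qq ^ (a + l)" by (rule power_int_of_nat)
    finally show ?thesis .
  qed
  have "(\<Sum>ks\<in>compositions (n - a). cc ks * (1 / (1 - T * qq ^ (a + last ks))))
      = (\<Sum>ls\<in>compositions (n - a). 1 / (1 - T * qq ^ (a + hd ls)) * cc ls)"
  proof -
    have "(\<Sum>ks\<in>compositions (n - a). cc ks * (1 / (1 - T * qq ^ (a + last ks))))
        = (\<Sum>ls\<in>compositions (n - a). cc (rev ls) * (1 / (1 - T * qq ^ (a + last (rev ls)))))"
      by (rule sum_comp_rev)
    also have "\<dots> = (\<Sum>ls\<in>compositions (n - a). 1 / (1 - T * qq ^ (a + hd ls)) * cc ls)"
      by (rule sum.cong[OF refl]) (simp add: cc_rev last_rev)
    finally show ?thesis .
  qed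
  thus ?thesis unfolding L_def R_def e1 e2 pw1 by simp
qed

lemma R_fe:
  assumes T: "T \<noteq> 0" and a: "1 \<le> a" "a \<le> n"
  shows "R a (1 / (qq ^ n * T)) = L (n + 1 - a) T"
proof -
  have e1: "n - (n + 1 - a) = a - 1" using a by simp
  have pw1: "1 / (qq ^ n * T) * qq ^ (n - a + 1 + h) = qq powi (int (n + 1 - a) + int h - int n) / T" for h
  proof -
    have "1 / (qq ^ n * T) * qq ^ (n - a + 1 + h) = (qq ^ (n - a + 1 + h) * qq powi (- int n)) / T"
      using qq_nz by (simp add: power_int_minus divide_inverse)
    also have "qq ^ (n - a + 1 + h) * qq powi (- int n) = qq powi (int (n - a + 1 + h)) * qq powi (- int n)"
      by (simp only: power_int_of_nat)
    also have "\<dots> = qq powi (int (n - a + 1 + h) + - int n)" by (rule pw_mult)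
    also have "int (n - a + 1 + h) + - int n = int (n + 1 - a) + int h - int n" using a by simp
    finally show ?thesis .
  qed
  have "(\<Sum>ls\<in>compositions (a - 1). 1 / (1 - qq powi (int (n + 1 - a) + int (hd ls) - int n) / T) * cc ls)
      = (\<Sum>ks\<in>compositions (a - 1). cc ks * (1 / (1 - qq powi (int (n + 1 - a) + int (last ks) - int n) / T)))"
  proof -
    have "(\<Sum>ls\<in>compositions (a - 1). 1 / (1 - qq powi (int (n + 1 - a) + int (hd ls) - int n) / T) * cc ls)
        = (\<Sum>ks\<in>compositions (a - 1). 1 / (1 - qq powi (int (n + 1 - a) + int (hd (rev ks)) - int n) / T) * cc (rev ks))"
      by (rule sum_comp_rev)
    also have "\<dots> = (\<Sum>ks\<in>compositions (a - 1). cc ks * (1 / (1 - qq powi (int (n + 1 - a) + int (last ks) - int n) / T)))"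
      by (rule sum.cong[OF refl]) (simp add: cc_rev hd_rev)
    finally show ?thesis .
  qed
  thus ?thesis unfolding L_def R_def e1 pw1 by simp
qed

lemma M_fe:
  assumes T: "T \<noteq> 0" and a: "1 \<le> a" "a \<le> n"
  shows "Z (1 / (qq ^ n * T) * qq ^ (n - a)) = Z (T * qq ^ (n - (n + 1 - a)))"
proof -
  have e: "n - (n + 1 - a) = a - 1" using a by simp
  have "qq ^ n = qq * qq ^ (a - 1) * qq ^ (n - a)"
  proof -
    have "n = 1 + (a - 1) + (n - a)" using a by simp
    hence "qq ^ n = qq ^ (1 + (a - 1) + (n - a))" by simp
    thus ?thesis by (simp add: power_add)
  qed
  hence "1 / (qq ^ n * T) * qq ^ (n - a) = 1 / (qq * (T * qq ^ (a - 1)))"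
    using qq_nz T by (simp add: field_simps)
  moreover have "Z (1 / (qq * (T * qq ^ (a - 1)))) = Z (T * qq ^ (a - 1))"
    by (rule Zf_fe[OF fe Q_pos]) (use T qq_nz in simp)
  ultimately show ?thesis unfolding e by simp
qed

lemma D_fe:
  assumes T: "T \<noteq> 0"
  shows "D (1 / (qq ^ n * T)) = D T"
proof -
  have "D (1 / (qq ^ n * T)) = Cn * (\<Sum>a=1..n. L a (1 / (qq ^ n * T)) * Z (1 / (qq ^ n * T) * qq ^ (n - a)) * R a (1 / (qq ^ n * T)))"
    by (rule derive_eq)
  also have "\<dots> = Cn * (\<Sum>a=1..n. R (n + 1 - a) T * Z (T * qq ^ (n - (n + 1 - a))) * L (n + 1 - a) T)"
  proof (intro arg_cong[where f="\<lambda>x. Cn * x"] sum.cong refl)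
    fix a assume "a \<in> {1..n}"
    hence a: "1 \<le> a" "a \<le> n" by auto
    show "L a (1 / (qq ^ n * T)) * Z (1 / (qq ^ n * T) * qq ^ (n - a)) * R a (1 / (qq ^ n * T))
        = R (n + 1 - a) T * Z (T * qq ^ (n - (n + 1 - a))) * L (n + 1 - a) T"
      unfolding L_fe[OF T a] R_fe[OF T a] M_fe[OF T a] ..
  qed
  also have "(\<Sum>a=1..n. R (n + 1 - a) T * Z (T * qq ^ (n - (n + 1 - a))) * L (n + 1 - a) T)
      = (\<Sum>a=1..n. R (n + 1 - (n + 1 - a)) T * Z (T * qq ^ (n - (n + 1 - (n + 1 - a)))) * L (n + 1 - (n + 1 - a)) T)"
    using sum.atLeastAtMost_rev[of "\<lambda>a. R (n + 1 - a) T * Z (T * qq ^ (n - (n + 1 - a))) * L (n + 1 - a) T" 1 n]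
    by simp
  also have "\<dots> = (\<Sum>a=1..n. L a T * Z (T * qq ^ (n - a)) * R a T)"
    by (rule sum.cong[OF refl]) (auto simp: ac_simps)
  finally show ?thesis by (simp add: derive_eq)
qed

end



context dz begin

lemma L_at0: "(L a \<longlongrightarrow> (if n - a = 0 then 1 else 0)) (at 0)"
proof (cases "n - a = 0")
  case True
  hence "L a = (\<lambda>_. 1)" by (simp add: L_def fun_eq_iff)
  thus ?thesis using True by simp
next
  case False
  define E where "E ks = qq powi (int a + int (last ks) - int n)" for ks
  have "((\<lambda>T. \<Sum>ks\<in>compositions (n - a). cc ks * (1 / (1 - E ks / T))) \<longlongrightarrow> (\<Sum>ks\<in>compositions (n - a). 0)) (at 0)"
  proof (rule tendsto_sum)
    fix ks assume "ks \<in> compositions (n - a)"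
    have E0: "E ks \<noteq> 0" unfolding E_def using pw_nz by blast
    have ev: "eventually (\<lambda>T. cc ks * (T / (T - E ks)) = cc ks * (1 / (1 - E ks / T))) (at 0)"
      using ev_ne[of 0 0]
    proof eventually_elim
      case (elim T)
      have "1 - E ks / T = (T - E ks) / T" using elim by (simp add: field_simps)
      thus ?case by simp
    qed
    have "((\<lambda>T. cc ks * (T / (T - E ks))) \<longlongrightarrow> cc ks * (0 / (0 - E ks))) (at 0)"
      using E0 by (intro tendsto_intros) auto
    thus "((\<lambda>T. cc ks * (1 / (1 - E ks / T))) \<longlongrightarrow> 0) (at 0)"
      using Lim_transform_eventually[OF _ ev] by simp
  qed
  thus ?thesis using False unfolding L_def E_def by simp
qed

lemma R_at0: "(R a \<longlongrightarrow> R a 0) (at 0)"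
  by (rule R_cont) auto

lemma M_at0:
  assumes K: "K \<noteq> 0"
  shows "((\<lambda>T. T powi (int g - 1) * Z (T * K)) \<longlongrightarrow> K powi (1 - int g) * poly p 0) (at 0)"
proof -
  have ev: "eventually (\<lambda>T. K powi (1 - int g) * poly p (T * K) / ((1 - T * K) * (1 - qq * (T * K)))
        = T powi (int g - 1) * Z (T * K)) (at 0)"
    using ev_ne[of 0 0]
  proof eventually_elim
    case (elim T)
    have "T powi (int g - 1) * (T * K) powi (1 - int g) = K powi (1 - int g)"
    proof -
      have "T powi (int g - 1) * (T * K) powi (1 - int g) = (T powi (int g - 1) * T powi (1 - int g)) * K powi (1 - int g)"
        by (simp add: power_int_mult_distrib)
      also have "T powi (int g - 1) * T powi (1 - int g) = T powi (int g - 1 + (1 - int g))"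
        using power_int_add[of T "int g - 1" "1 - int g"] elim by simp
      finally show ?thesis by simp
    qed
    thus ?case unfolding Zf_def by (simp add: ac_simps)
  qed
  have "((\<lambda>T. K powi (1 - int g) * poly p (T * K) / ((1 - T * K) * (1 - qq * (T * K))))
     \<longlongrightarrow> K powi (1 - int g) * poly p (0 * K) / ((1 - 0 * K) * (1 - qq * (0 * K)))) (at 0)"
    by (intro tendsto_intros) auto
  thus ?thesis using Lim_transform_eventually[OF _ ev] by simp
qed

lemma Rn0: "R n 0 = S (n - 1)"
proof (cases "n - 1 = 0")
  case True thus ?thesis by (simp add: R_def S_def comp_0 cc_Nil)
next
  case False thus ?thesis by (simp add: R_def S_def)
qed

lemma D_at0: "((\<lambda>T. T powi (int g - 1) * D T) \<longlongrightarrow> Cn * poly p 0 * S (n - 1)) (at 0)"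
proof -
  have lim: "((\<lambda>T. Cn * (\<Sum>a=1..n. L a T * (T powi (int g - 1) * Z (T * qq ^ (n - a))) * R a T))
     \<longlongrightarrow> Cn * (\<Sum>a=1..n. (if n - a = 0 then 1 else 0) * ((qq ^ (n - a)) powi (1 - int g) * poly p 0) * R a 0)) (at 0)"
    by (intro tendsto_intros L_at0 M_at0 R_at0) (use qq_nz in simp)
  have "(\<Sum>a=1..n. (if n - a = 0 then 1 else 0) * ((qq ^ (n - a)) powi (1 - int g) * poly p 0) * R a 0)
      = (\<Sum>a=1..n. if a = n then poly p 0 * R n 0 else 0)"
    by (rule sum.cong[OF refl]) auto
  also have "\<dots> = poly p 0 * S (n - 1)" using n1 by (simp add: Rn0)
  finally have v: "Cn * (\<Sum>a=1..n. (if n - a = 0 then 1 else 0) * ((qq ^ (n - a)) powi (1 - int g) * poly p 0) * R a 0)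
     = Cn * poly p 0 * S (n - 1)" by simp
  have "(\<lambda>T. T powi (int g - 1) * D T) = (\<lambda>T. Cn * (\<Sum>a=1..n. L a T * (T powi (int g - 1) * Z (T * qq ^ (n - a))) * R a T))"
    by (simp add: fun_eq_iff derive_eq sum_distrib_left ac_simps)
  thus ?thesis using lim unfolding v by simp
qed

end



lemma ev_notin_finite:
  assumes "finite S"
  shows "eventually (\<lambda>z::complex. z \<notin> S) (at x)"
proof -
  have "eventually (\<lambda>z. \<forall>y\<in>S. z \<noteq> y) (at x)"
    by (rule eventually_ball_finite[OF assms]) (auto intro: ev_ne)
  thus ?thesis by eventually_elim auto
qed

lemma ev_eq_imp_eq:
  fixes f g :: "complex \<Rightarrow> complex"
  assumes "isCont f x" "isCont g x" "eventually (\<lambda>z. f z = g z) (at x)"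
  shows "f x = g x"
proof -
  have "(f \<longlongrightarrow> f x) (at x)" using assms(1) isCont_def by blast
  moreover have "(f \<longlongrightarrow> g x) (at x)"
    using assms(2) isCont_def Lim_transform_eventually[of g "g x" "at x" f] assms(3)
    by (metis (mono_tags, lifting) eventually_mono)
  ultimately show ?thesis using tendsto_unique at_neq_bot by blast
qed

lemma poly_extract:
  fixes F :: "complex \<Rightarrow> complex" and S :: "complex set"
  assumes fin: "finite S" and holo: "F holomorphic_on (- S)"
    and lim: "\<And>c. c \<in> S \<Longrightarrow> ((\<lambda>z. (z - c) * F z) \<longlongrightarrow> 0) (at c)"
    and bnd: "\<And>z. A \<le> norm z \<Longrightarrow> norm (F z) \<le> B * norm z ^ N"
  shows "\<exists>p. \<forall>z. z \<notin> S \<longrightarrow> F z = poly p z"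
proof -
  have O1: "F \<in> O[at c](\<lambda>_. 1)" if c: "c \<in> S" for c
  proof -
    define U where "U = - (S - {c})"
    have oU: "open U" unfolding U_def using fin by (intro open_Compl finite_imp_closed) auto
    have cU: "c \<in> interior U" using oU by (simp add: U_def interior_open)
    have hU: "F holomorphic_on (U - {c})" using holo by (rule holomorphic_on_subset) (auto simp: U_def)
    have "\<exists>g. g holomorphic_on U \<and> (\<forall>z \<in> U - {c}. g z = F z)"
      using holomorphic_on_extend_lim[OF hU cU] lim[OF c] by simp
    hence "\<exists>B. eventually (\<lambda>z. norm (F z) \<le> B) (at c)"
      using holomorphic_on_extend_bounded[OF hU cU] by simp
    then obtain B where "eventually (\<lambda>z. norm (F z) \<le> B) (at c)" by blast
    hence "eventually (\<lambda>z. norm (F z) \<le> B * norm ((\<lambda>_. 1::complex) z)) (at c)" by simp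
    thus ?thesis by (rule bigoI)
  qed
  have holo': "F holomorphic_on UNIV - S" using holo by (simp add: Compl_eq_Diff_UNIV)
  obtain G where G: "G holomorphic_on UNIV" "\<And>z. z \<in> UNIV - S \<Longrightarrow> G z = F z"
  proof -
    have "\<exists>g. g holomorphic_on UNIV \<and> (\<forall>z\<in>UNIV-S. g z = F z)"
      by (rule removable_singularities[OF fin _ holo' O1]) simp
    thus ?thesis using that by blast
  qed
  define A' where "A' = max A (1 + (\<Sum>s\<in>S. norm s))"
  have nS: "z \<notin> S" if "A' \<le> norm z" for z
  proof
    assume "z \<in> S"
    hence "norm z \<le> (\<Sum>s\<in>S. norm s)" using fin by (intro member_le_sum) auto
    thus False using that by (simp add: A'_def)
  qed
  have "norm (G z) \<le> B * norm z ^ N" if "A' \<le> norm z" for z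
    using G(2)[of z] nS[OF that] bnd[of z] that by (simp add: A'_def)
  hence Gp: "G z = (\<Sum>k\<le>N. (deriv ^^ k) G 0 / fact k * z ^ k)" for z
    by (rule Liouville_polynomial[OF G(1)])
  define p where "p = (\<Sum>k\<le>N. monom ((deriv ^^ k) G 0 / fact k) k)"
  have "poly p z = G z" for z
  proof -
    have "poly p z = (\<Sum>k\<le>N. (deriv ^^ k) G 0 / fact k * z ^ k)"
      unfolding p_def poly_sum poly_monom ..
    thus ?thesis using Gp[of z] by simp
  qed
  hence "\<forall>z. z \<notin> S \<longrightarrow> F z = poly p z" using G(2) by simp
  thus ?thesis by blast
qed



context dz begin

definition Sing :: "complex set" where "Sing = insert 0 (cm ` {..n})"

lemma fin_Sing: "finite Sing" by (simp add: Sing_def)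

lemma cm_char: "T * qq ^ k = 1 \<longleftrightarrow> T = cm k"
proof -
  have e: "cm k = inverse (qq ^ k)" by (simp add: cm_def power_int_minus)
  have nz: "qq ^ k \<noteq> 0" using qq_nz by simp
  show ?thesis unfolding e
  proof
    assume h: "T * qq ^ k = 1"
    have "T = T * qq ^ k * inverse (qq ^ k)" using nz by simp
    also have "\<dots> = inverse (qq ^ k)" using h by simp
    finally show "T = inverse (qq ^ k)" .
  next
    assume "T = inverse (qq ^ k)"
    thus "T * qq ^ k = 1" using nz by simp
  qed
qed

lemma notSing: "T \<notin> Sing \<Longrightarrow> k \<le> n \<Longrightarrow> T * qq ^ k \<noteq> 1"
  by (auto simp: cm_char Sing_def)

lemma L_holo:
  assumes a: "1 \<le> a" "a \<le> n"
  shows "L a holomorphic_on (- Sing)"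
proof (cases "n - a = 0")
  case True
  hence "L a = (\<lambda>_. 1)" by (simp add: L_def fun_eq_iff)
  thus ?thesis by simp
next
  case False
  have "L a = (\<lambda>T. \<Sum>ks\<in>compositions (n - a). cc ks * (1 / (1 - qq powi (int a + int (last ks) - int n) / T)))"
    using False by (simp add: L_def fun_eq_iff)
  moreover have "(\<lambda>T. \<Sum>ks\<in>compositions (n - a). cc ks * (1 / (1 - qq powi (int a + int (last ks) - int n) / T))) holomorphic_on (- Sing)"
  proof (intro holomorphic_intros)
    fix ks T assume ks: "ks \<in> compositions (n - a)" and T: "T \<in> - Sing"
    have T0: "T \<noteq> 0" using T by (auto simp: Sing_def)
    show "T \<noteq> 0" by (rule T0)
    have l: "last ks \<in> {1..n - a}" using comp_last_range[OF _ ks] False by auto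
    have ie: "int a + int (last ks) - int n = - int (n - a - last ks)" using l a by auto
    have "qq powi (int a + int (last ks) - int n) = cm (n - a - last ks)"
      unfolding cm_def ie ..
    moreover have "T \<noteq> cm (n - a - last ks)" using T by (auto simp: Sing_def)
    ultimately show "1 - qq powi (int a + int (last ks) - int n) / T \<noteq> 0" using T0 by (auto simp: field_simps)
  qed
  ultimately show ?thesis by simp
qed

lemma R_holo:
  assumes a: "1 \<le> a" "a \<le> n"
  shows "R a holomorphic_on (- Sing)"
proof (cases "a - 1 = 0")
  case True
  hence "R a = (\<lambda>_. 1)" by (simp add: R_def fun_eq_iff)
  thus ?thesis by simp
next
  case False
  have "R a = (\<lambda>T. \<Sum>ls\<in>compositions (a - 1). (1 / (1 - T * qq ^ (n - a + 1 + hd ls))) * cc ls)"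
    using False by (simp add: R_def fun_eq_iff)
  moreover have "(\<lambda>T. \<Sum>ls\<in>compositions (a - 1). (1 / (1 - T * qq ^ (n - a + 1 + hd ls))) * cc ls) holomorphic_on (- Sing)"
  proof (intro holomorphic_intros)
    fix ls T assume ls: "ls \<in> compositions (a - 1)" and T: "T \<in> - Sing"
    have l: "hd ls \<in> {1..a - 1}" using comp_hd_range[OF _ ls] False by auto
    have k: "n - a + 1 + hd ls \<le> n" using l a by auto
    have "T * qq ^ (n - a + 1 + hd ls) \<noteq> 1" by (rule notSing) (use T k in auto)
    thus "1 - T * qq ^ (n - a + 1 + hd ls) \<noteq> 0" by simp
  qed
  ultimately show ?thesis by simp
qed

lemma M_holo:
  assumes a: "1 \<le> a" "a \<le> n"
  shows "(\<lambda>T. Z (T * qq ^ (n - a))) holomorphic_on (- Sing)"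
proof -
  have "(Z \<circ> (\<lambda>T. T * qq ^ (n - a))) holomorphic_on (- Sing)"
  proof (rule holomorphic_on_compose_gen[OF _ Z_holo])
    show "(\<lambda>T. T * qq ^ (n - a)) holomorphic_on - Sing" by (intro holomorphic_intros)
    show "(\<lambda>T. T * qq ^ (n - a)) ` (- Sing) \<subseteq> - {0, 1, 1 / qq}"
    proof
      fix x assume "x \<in> (\<lambda>T. T * qq ^ (n - a)) ` (- Sing)"
      then obtain T where T: "T \<notin> Sing" "x = T * qq ^ (n - a)" by auto
      have "T \<noteq> 0" using T by (auto simp: Sing_def)
      moreover have "T * qq ^ (n - a) \<noteq> 1" using notSing[OF T(1)] by simp
      moreover have "T * qq ^ (Suc (n - a)) \<noteq> 1" by (rule notSing[OF T(1)]) (use a in simp)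
      hence "T * qq ^ (n - a) \<noteq> 1 / qq"
      proof (rule contrapos_nn)
        assume h: "T * qq ^ (n - a) = 1 / qq"
        have "T * qq ^ (Suc (n - a)) = (T * qq ^ (n - a)) * qq" by simp
        also have "\<dots> = 1" unfolding h using qq_nz by simp
        finally show "T * qq ^ (Suc (n - a)) = 1" .
      qed
      ultimately show "x \<in> - {0, 1, 1 / qq}" using T qq_nz by auto
    qed
  qed
  thus ?thesis by (simp add: o_def)
qed

lemma D_holo: "D holomorphic_on (- Sing)"
proof -
  have "(\<lambda>T. Cn * (\<Sum>a=1..n. L a T * Z (T * qq ^ (n - a)) * R a T)) holomorphic_on (- Sing)"
    by (intro holomorphic_intros holomorphic_on_sum holomorphic_on_mult L_holo M_holo R_holo) auto
  moreover have "D = (\<lambda>T. Cn * (\<Sum>a=1..n. L a T * Z (T * qq ^ (n - a)) * R a T))"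
    by (simp add: fun_eq_iff derive_eq)
  ultimately show ?thesis by simp
qed

end



context dz begin

definition F :: "complex \<Rightarrow> complex" where
  "F T = (1 - T) * (1 - qq ^ n * T) * T powi (int g - 1) * D T"

definition L0 :: complex where "L0 = Cn * poly p 0 * S (n - 1)"

lemma zero_Sing: "0 \<in> Sing" by (simp add: Sing_def)
lemma cm_Sing: "m \<le> n \<Longrightarrow> cm m \<in> Sing" by (simp add: Sing_def)

lemma F_holo: "F holomorphic_on (- Sing)"
proof -
  have "(\<lambda>T. (1 - T) * (1 - qq ^ n * T) * T powi (int g - 1) * D T) holomorphic_on (- Sing)"
    by (intro holomorphic_intros D_holo) (use zero_Sing in auto)
  thus ?thesis by (simp add: F_def[abs_def])
qed

lemma F_at0: "(F \<longlongrightarrow> L0) (at 0)"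
proof -
  have "((\<lambda>T. (1 - T) * (1 - qq ^ n * T) * (T powi (int g - 1) * D T)) \<longlongrightarrow> (1 - 0) * (1 - qq ^ n * 0) * L0) (at 0)"
    unfolding L0_def by (intro tendsto_intros D_at0)
  thus ?thesis by (simp add: F_def[abs_def] ac_simps)
qed

lemma F_res: "c \<in> Sing \<Longrightarrow> ((\<lambda>z. (z - c) * F z) \<longlongrightarrow> 0) (at c)"
proof -
  assume "c \<in> Sing"
  then consider "c = 0" | m where "m \<le> n" "c = cm m" by (auto simp: Sing_def)
  thus ?thesis
  proof cases
    case 1
    have "((\<lambda>z. (z - 0) * F z) \<longlongrightarrow> (0 - 0) * L0) (at 0)" by (intro tendsto_intros F_at0)
    thus ?thesis using 1 by simp
  next
    case 2
    have c0: "c \<noteq> 0" using 2 cm_nz by simp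
    have lim: "((\<lambda>z. ((1 - z) * (1 - qq ^ n * z) * z powi (int g - 1)) * ((z - c) * D z))
       \<longlongrightarrow> ((1 - c) * (1 - qq ^ n * c) * c powi (int g - 1)) * (Cn * (\<Sum>a=1..n. Va m a))) (at c)"
    proof -
      have pre: "((\<lambda>z. (1 - z) * (1 - qq ^ n * z) * z powi (int g - 1)) \<longlongrightarrow> ((1 - cm m) * (1 - qq ^ n * cm m) * cm m powi (int g - 1))) (at (cm m))"
        using cm_nz by (intro tendsto_intros) auto
      show ?thesis using tendsto_mult[OF pre D_res[OF 2(1)]] 2(2) by simp
    qed
    have z: "((1 - c) * (1 - qq ^ n * c) * c powi (int g - 1)) * (Cn * (\<Sum>a=1..n. Va m a)) = 0"
    proof -
      consider "m = 0" | "m = n" | "1 \<le> m" "m < n" using 2 by linarith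
      thus ?thesis
      proof cases
        case 1 thus ?thesis using 2 by (simp add: cm_def)
      next
        case 3 thus ?thesis using Vsum_mid by simp
      next
        case m: 2
        have "c * qq ^ n = 1" using 2 m cm_char by simp
        hence "1 - qq ^ n * c = 0" by (simp add: ac_simps)
        thus ?thesis by simp
      qed
    qed
    have "(\<lambda>z. (z - c) * F z) = (\<lambda>z. ((1 - z) * (1 - qq ^ n * z) * z powi (int g - 1)) * ((z - c) * D z))"
      by (simp add: F_def fun_eq_iff ac_simps)
    thus ?thesis using lim unfolding z by simp
  qed
qed

lemma F_fe:
  assumes T: "T \<noteq> 0"
  shows "F T = (qq ^ n) ^ g * T ^ (2 * g) * F (1 / (qq ^ n * T))"
proof -
  define q where "q = qq ^ n"
  have q0: "q \<noteq> 0" using qq_nz by (simp add: q_def)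
  define w where "w = 1 / (q * T)"
  have w0: "w \<noteq> 0" using q0 T by (simp add: w_def)
  have Dw: "D w = D T" unfolding w_def q_def by (rule D_fe[OF T])
  have "(1 - w) * (1 - q * w) * w powi (int g - 1) = (1 - T) * (1 - q * T) * T powi (int g - 1) / (q ^ g * T ^ (2 * g))"
  proof -
    have e1: "1 - w = (q * T - 1) / (q * T)" using q0 T by (simp add: w_def field_simps)
    have e2: "1 - q * w = (T - 1) / T" using q0 T by (simp add: w_def field_simps)
    have e3: "w powi (int g - 1) = w ^ g / w" using w0 by (rule powi_gm1)
    have e4: "T powi (int g - 1) = T ^ g / T" using T by (rule powi_gm1)
    have e5: "w ^ g = 1 / (q ^ g * T ^ g)" by (simp add: w_def power_divide power_mult_distrib)
    have e6: "T ^ (2 * g) = T ^ g * T ^ g" by (simp add: mult_2 power_add)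
    have nz: "q ^ g \<noteq> 0" "T ^ g \<noteq> 0" using q0 T by auto
    show ?thesis unfolding e1 e2 e3 e4 e5 e6 unfolding w_def using nz q0 T
      by (simp add: field_simps)
  qed
  hence "F (1 / (q * T)) = (1 - T) * (1 - q * T) * T powi (int g - 1) / (q ^ g * T ^ (2 * g)) * D T"
    unfolding F_def q_def[symmetric] w_def[symmetric] Dw by simp
  moreover have "q ^ g * T ^ (2 * g) \<noteq> 0" using q0 T by simp
  ultimately show ?thesis unfolding q_def[symmetric] by (simp add: F_def q_def)
qed

end



context dz begin

lemma F_bound: "\<exists>A B. \<forall>z. A \<le> norm z \<longrightarrow> norm (F z) \<le> B * norm z ^ (2 * g)"
proof -
  define q where "q = qq ^ n"
  have q0: "norm q > 0" using qq_nz by (simp add: q_def)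
  have "eventually (\<lambda>w. dist (F w) L0 < 1) (at 0)" using F_at0 by (rule tendstoD) simp
  then obtain d where d: "d > 0" "\<And>w. w \<noteq> 0 \<Longrightarrow> dist w 0 < d \<Longrightarrow> dist (F w) L0 < 1"
    unfolding eventually_at by blast
  define A where "A = 1 / (norm q * d) + 1"
  define B where "B = norm q ^ g * (norm L0 + 1)"
  have "norm (F z) \<le> B * norm z ^ (2 * g)" if z: "A \<le> norm z" for z
  proof -
    have Apos: "A > 1 / (norm q * d)" by (simp add: A_def)
    have zpos: "norm z > 1 / (norm q * d)" using z Apos by linarith
    have z0: "z \<noteq> 0" using zpos q0 d by (auto simp: field_simps)
    define w where "w = 1 / (q * z)"
    have w0: "w \<noteq> 0" using z0 q0 by (auto simp: w_def)
    have "norm w = 1 / (norm q * norm z)" by (simp add: w_def norm_divide norm_mult)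
    also have "\<dots> < d"
    proof -
      have pos: "norm q * norm z > 0" using z0 q0 by simp
      have "1 < d * (norm q * norm z)" using zpos q0 d by (simp add: field_simps)
      thus ?thesis using pos by (simp add: field_simps)
    qed
    finally have "dist (F w) L0 < 1" using d(2)[OF w0] by simp
    hence Fw: "norm (F w) \<le> norm L0 + 1" by (metis dist_norm norm_triangle_sub add.commute less_le_not_le
        add_le_cancel_left order_trans norm_minus_commute less_imp_le)
    have "F z = q ^ g * z ^ (2 * g) * F w" unfolding w_def q_def by (rule F_fe[OF z0])
    hence "norm (F z) = norm q ^ g * norm z ^ (2 * g) * norm (F w)" by (simp add: norm_mult norm_power)
    also have "\<dots> \<le> norm q ^ g * norm z ^ (2 * g) * (norm L0 + 1)"
      by (intro mult_left_mono Fw) auto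
    finally show ?thesis by (simp add: B_def ac_simps)
  qed
  thus ?thesis by blast
qed

lemma exists_p':
  "\<exists>p'. \<forall>z. z \<notin> Sing \<longrightarrow> F z = poly p' z"
proof -
  obtain A B where AB: "\<And>z. A \<le> norm z \<Longrightarrow> norm (F z) \<le> B * norm z ^ (2 * g)" using F_bound by blast
  show ?thesis by (rule poly_extract[OF fin_Sing F_holo F_res AB])
qed

end



context dz begin

lemma one_Sing: "1 \<in> Sing" using cm_Sing[of 0] by (simp add: cm_def)

lemma main_step:
  "\<exists>p'. pfe (Q ^ n) g p' \<and> (\<forall>z. z \<notin> Sing \<longrightarrow> D z = Zf (Q ^ n) g p' z)
      \<and> poly p' 0 = L0 \<and> residue D 1 = Cn * S n"
proof -
  obtain p' where p': "\<And>z. z \<notin> Sing \<Longrightarrow> F z = poly p' z" using exists_p' by blast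
  define q where "q = qq ^ n"
  have q0: "q \<noteq> 0" using qq_nz by (simp add: q_def)
  have qQ: "of_nat (Q ^ n) = q" by (simp add: q_def)
  have DZ: "D z = Zf (Q ^ n) g p' z" if z: "z \<notin> Sing" for z
  proof -
    have z0: "z \<noteq> 0" using z zero_Sing by auto
    have z1: "1 - z \<noteq> 0" using z one_Sing by auto
    have z2: "1 - q * z \<noteq> 0" using notSing[OF z, of n] by (auto simp: q_def ac_simps)
    have "Zf (Q ^ n) g p' z = z powi (1 - int g) * F z / ((1 - z) * (1 - q * z))"
      unfolding Zf_def qQ p'[OF z] ..
    also have "\<dots> = (z / z ^ g) * (((1 - z) * (1 - q * z)) * ((z ^ g / z) * D z)) / ((1 - z) * (1 - q * z))"
      unfolding F_def powi_1mg[OF z0] powi_gm1[OF z0] q_def[symmetric] by (simp only: ac_simps)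
    also have "\<dots> = (z / z ^ g) * ((z ^ g / z) * D z)"
    proof -
      have X: "(1 - z) * (1 - q * z) \<noteq> 0" using z1 z2 by simp
      show ?thesis using X by (simp add: nonzero_mult_div_cancel_left)
    qed
    also have "\<dots> = ((z / z ^ g) * (z ^ g / z)) * D z" by (simp only: ac_simps)
    also have "(z / z ^ g) * (z ^ g / z) = 1" using z0 by simp
    finally show ?thesis by simp
  qed
  have pfe': "pfe (Q ^ n) g p'"
    unfolding pfe_def qQ
  proof (intro allI impI)
    fix T :: complex assume T: "T \<noteq> 0"
    define E where "E = Sing \<union> (\<lambda>s. 1 / (q * s)) ` Sing"
    have finE: "finite E" using fin_Sing by (simp add: E_def)
    have eq: "poly p' z = q ^ g * z ^ (2 * g) * poly p' (1 / (q * z))" if z: "z \<notin> E" for z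
    proof -
      have zS: "z \<notin> Sing" using z by (simp add: E_def)
      have wS: "1 / (q * z) \<notin> Sing"
      proof
        assume w: "1 / (q * z) \<in> Sing"
        have zz: "z = 1 / (q * (1 / (q * z)))" using q0 by (cases "z = 0") (auto simp: field_simps)
        have "z \<in> (\<lambda>s. 1 / (q * s)) ` Sing" by (rule rev_image_eqI[where f="\<lambda>s. 1 / (q * s)", OF w zz])
        thus False using z by (simp add: E_def)
      qed
      have z0: "z \<noteq> 0" using zS zero_Sing by auto
      have "poly p' z = F z" using p'[OF zS] by simp
      also have "\<dots> = q ^ g * z ^ (2 * g) * F (1 / (q * z))" unfolding q_def by (rule F_fe[OF z0])
      also have "F (1 / (q * z)) = poly p' (1 / (q * z))" by (rule p'[OF wS])
      finally show ?thesis .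
    qed
    show "poly p' T = q ^ g * T ^ (2 * g) * poly p' (1 / (q * T))"
    proof (rule ev_eq_imp_eq[where f="poly p'" and g="\<lambda>T. q ^ g * T ^ (2 * g) * poly p' (1 / (q * T))"])
      show "isCont (poly p') T" by simp
      show "isCont (\<lambda>T. q ^ g * T ^ (2 * g) * poly p' (1 / (q * T))) T"
        using T q0 by (intro continuous_intros) auto
      show "eventually (\<lambda>z. poly p' z = q ^ g * z ^ (2 * g) * poly p' (1 / (q * z))) (at T)"
        using ev_notin_finite[OF finE] by eventually_elim (rule eq)
    qed
  qed
  have res: "residue D 1 = Cn * S n"
  proof (rule residue_simple')
    show "open (- (Sing - {1}))" using fin_Sing by (intro open_Compl finite_imp_closed) auto
    show "(1::complex) \<in> - (Sing - {1})" by simp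
    have "- (Sing - {1}) - {1} = - Sing" using one_Sing by auto
    thus "D holomorphic_on - (Sing - {1}) - {1}" using D_holo by simp
    have "((\<lambda>T. (T - cm 0) * D T) \<longlongrightarrow> Cn * (\<Sum>a=1..n. Va 0 a)) (at (cm 0))" by (rule D_res) simp
    thus "((\<lambda>w. D w * (w - 1)) \<longlongrightarrow> Cn * S n) (at 1)"
      unfolding Vsum_0 by (simp add: cm_def mult.commute)
  qed
  have a0: "poly p' 0 = L0"
  proof -
    have "(poly p' \<longlongrightarrow> L0) (at 0)"
    proof (rule Lim_transform_eventually[OF F_at0])
      show "eventually (\<lambda>z. F z = poly p' z) (at 0)"
        using ev_notin_finite[OF fin_Sing] by eventually_elim (rule p')
    qed
    moreover have "(poly p' \<longlongrightarrow> poly p' 0) (at 0)" by (intro tendsto_intros)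
    ultimately show ?thesis using tendsto_unique at_neq_bot by blast
  qed
  show ?thesis using pfe' DZ a0 res by blast
qed

end



lemma step_global:
  assumes "Q \<ge> 2" "n \<ge> 1" "pfe Q g p"
  shows "\<exists>p'. pfe (Q ^ n) g p' \<and> (\<forall>\<^sub>F z in cofinite. derive_zeta Q g n (Zf Q g p) z = Zf (Q ^ n) g p' z)
     \<and> poly p' 0 = of_nat Q powi (int (n choose 2) * (int g - 1)) * poly p 0
                    * (\<Sum>ks\<in>compositions (n - 1). comp_coeff Q (Zf Q g p) ks)
     \<and> residue (derive_zeta Q g n (Zf Q g p)) 1
         = of_nat Q powi (int (n choose 2) * (int g - 1)) * (\<Sum>ks\<in>compositions n. comp_coeff Q (Zf Q g p) ks)"
proof -
  interpret dz Q g p n using assms by unfold_locales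
  obtain p' where p': "pfe (Q ^ n) g p'" "\<And>z. z \<notin> Sing \<Longrightarrow> D z = Zf (Q ^ n) g p' z"
    "poly p' 0 = L0" "residue D 1 = Cn * S n"
    using main_step by blast
  have "\<forall>\<^sub>F z in cofinite. D z = Zf (Q ^ n) g p' z"
    unfolding eventually_cofinite
    by (rule finite_subset[OF _ fin_Sing]) (use p'(2) in auto)
  thus ?thesis using p' unfolding L0_def Cn_def S_def by blast
qed

lemma cof_at: "eventually P cofinite \<Longrightarrow> eventually P (at (x::complex))"
proof -
  assume "eventually P cofinite"
  hence fin: "finite {x. \<not> P x}" by (simp add: eventually_cofinite)
  show ?thesis using ev_notin_finite[OF fin] by eventually_elim auto
qed

lemma zeta_val_cong:
  assumes "\<forall>\<^sub>F z in cofinite. Z1 z = Z2 z"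
  shows "zeta_val Q Z1 k = zeta_val Q Z2 k"
proof (cases "k = 1")
  case True
  have "residue Z1 1 = residue Z2 1" by (rule residue_cong[OF cof_at[OF assms] refl])
  thus ?thesis using True by (simp add: zeta_val_def)
next
  case False
  have "Lim (at (of_nat Q powi (- int k))) Z1 = Lim (at (of_nat Q powi (- int k))) Z2"
    by (rule Lim_cong[OF cof_at[OF assms] refl])
  thus ?thesis using False by (simp add: zeta_val_def)
qed

lemma derive_cong:
  assumes Q: "Q > 0" and ev: "\<forall>\<^sub>F z in cofinite. Z1 z = Z2 z"
  shows "\<forall>\<^sub>F T in cofinite. derive_zeta Q g n Z1 T = derive_zeta Q g n Z2 T"
proof -
  have zv: "zeta_val Q Z1 = zeta_val Q Z2" using zeta_val_cong[OF ev] by (simp add: fun_eq_iff)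
  have vh: "vhat Q Z1 = vhat Q Z2" by (simp add: fun_eq_iff vhat_def zv)
  have cc: "comp_coeff Q Z1 = comp_coeff Q Z2" by (simp add: fun_eq_iff comp_coeff_def vh)
  define E where "E = {z. Z1 z \<noteq> Z2 z}"
  have finE: "finite E" using ev by (simp add: eventually_cofinite E_def)
  define B where "B = (\<Union>a\<in>{1..n}. (\<lambda>x. x / of_nat Q ^ (n - a)) ` E)"
  have finB: "finite B" using finE by (simp add: B_def)
  have eq: "derive_zeta Q g n Z1 T = derive_zeta Q g n Z2 T" if T: "T \<notin> B" for T
  proof -
    have Zeq: "Z1 (T * of_nat Q ^ (n - a)) = Z2 (T * of_nat Q ^ (n - a))" if a: "a \<in> {1..n}" for a
    proof (rule ccontr)
      assume "Z1 (T * of_nat Q ^ (n - a)) \<noteq> Z2 (T * of_nat Q ^ (n - a))"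
      hence "T * of_nat Q ^ (n - a) \<in> E" by (simp add: E_def)
      hence "(T * of_nat Q ^ (n - a)) / of_nat Q ^ (n - a) \<in> B" unfolding B_def using a by blast
      thus False using T Q by simp
    qed
    show ?thesis unfolding derive_zeta_def cc
      by (intro arg_cong2[where f="(*)"] refl sum.cong) (simp_all add: Zeq)
  qed
  show ?thesis unfolding eventually_cofinite
    by (rule finite_subset[OF _ finB]) (use eq in auto)
qed



definition good :: "nat \<Rightarrow> nat \<Rightarrow> (complex \<Rightarrow> complex) \<Rightarrow> bool" where
  "good Q g Zr \<longleftrightarrow> Q \<ge> 2 \<and> (\<exists>p. pfe Q g p \<and> (\<forall>\<^sub>F T in cofinite. Zr T = Zf Q g p T))"

lemma derived_snoc:
  "derived_zeta q g P (ms @ [n]) = derive_zeta (q_tuple q ms) g n (derived_zeta q g P ms)"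
  by (simp add: derived_zeta_def)

lemma q_tuple_snoc: "q_tuple q (ms @ [n]) = q_tuple q ms ^ n"
  by (simp add: q_tuple_def power_mult)

lemma cof_trans:
  "\<forall>\<^sub>F T in cofinite. f T = g T \<Longrightarrow> \<forall>\<^sub>F T in cofinite. g T = h T \<Longrightarrow> \<forall>\<^sub>F T in cofinite. f T = h T"
  by (erule (1) eventually_elim2) simp

lemma good_derived:
  assumes cz: "curve_zeta_data q g P"
  shows "(\<forall>k\<in>set ms. k > 0) \<Longrightarrow> good (q_tuple q ms) g (derived_zeta q g P ms)"
proof (induction ms rule: rev_induct)
  case Nil
  have "derived_zeta q g P [] = Zf q g (map_poly of_int P)"
    by (simp add: derived_zeta_def complete_zeta_Zf)
  thus ?case using curve_q_ge2[OF cz] pfe_base[OF cz] by (auto simp: good_def q_tuple_def)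
next
  case (snoc n ms)
  hence n: "n \<ge> 1" and IHm: "good (q_tuple q ms) g (derived_zeta q g P ms)" by auto
  define Q where "Q = q_tuple q ms"
  obtain p where Q2: "Q \<ge> 2" and p: "pfe Q g p" "\<forall>\<^sub>F T in cofinite. derived_zeta q g P ms T = Zf Q g p T"
    using IHm unfolding good_def Q_def by blast
  obtain p' where p': "pfe (Q ^ n) g p'" "\<forall>\<^sub>F z in cofinite. derive_zeta Q g n (Zf Q g p) z = Zf (Q ^ n) g p' z"
    using step_global[OF Q2 n p(1)] by blast
  have "\<forall>\<^sub>F T in cofinite. derive_zeta Q g n (derived_zeta q g P ms) T = derive_zeta Q g n (Zf Q g p) T"
    by (rule derive_cong) (use Q2 p(2) in auto)
  hence "\<forall>\<^sub>F T in cofinite. derived_zeta q g P (ms @ [n]) T = Zf (Q ^ n) g p' T"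
    unfolding derived_snoc Q_def[symmetric] using p'(2) by (rule cof_trans)
  moreover have "Q ^ n \<ge> 2"
  proof -
    have "Q \<le> Q ^ n" using Q2 n by (simp add: self_le_power)
    thus ?thesis using Q2 by simp
  qed
  ultimately show ?case using p'(1) unfolding good_def q_tuple_snoc Q_def[symmetric] by blast
qed

lemma poly_cof_unique:
  fixes p1 p2 :: "complex poly"
  assumes "\<forall>\<^sub>F T in cofinite. poly p1 T = poly p2 T"
  shows "p1 = p2"
proof (rule ccontr)
  assume "p1 \<noteq> p2"
  hence "p1 - p2 \<noteq> 0" by simp
  hence fin: "finite {x. poly (p1 - p2) x = 0}" by (rule poly_roots_finite)
  have fin2: "finite {x. poly p1 x \<noteq> poly p2 x}" using assms by (simp add: eventually_cofinite)
  have "UNIV = {x. poly (p1 - p2) x = 0} \<union> {x. poly p1 x \<noteq> poly p2 x}" by auto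
  hence "finite (UNIV :: complex set)" using fin fin2 by (metis finite_Un)
  thus False using infinite_UNIV_char_0 by blast
qed

lemma alg2:
  fixes X T Tg P :: complex
  assumes "T \<noteq> 0" "Tg \<noteq> 0" "X \<noteq> 0"
  shows "X * (Tg / T) * (T / Tg * P / X) = P"
  using assms by (simp add: field_simps)

lemma alpha_good:
  assumes Q2: "Q \<ge> 2" and p: "\<forall>\<^sub>F T in cofinite. Zr T = Zf Q g p T"
  shows "coeff (THE p. \<forall>\<^sub>F T in cofinite. poly p T = (1 - T) * (1 - of_nat Q * T) * T powi (int g - 1) * Zr T) 0
         = poly p 0"
proof -
  let ?P = "\<lambda>p. \<forall>\<^sub>F T in cofinite. poly p T = (1 - T) * (1 - of_nat Q * T) * T powi (int g - 1) * Zr T"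
  have e: "poly p T = (1 - T) * (1 - of_nat Q * T) * T powi (int g - 1) * Zf Q g p T"
    if T: "T \<notin> {0, 1, 1 / of_nat Q}" for T
  proof -
    have T0: "T \<noteq> 0" using T by auto
    have n1: "1 - T \<noteq> 0" using T by auto
    have n2: "1 - of_nat Q * T \<noteq> 0" using T Q2 by (auto simp: field_simps)
    have Tg: "T ^ g \<noteq> 0" using T0 by simp
    have X: "(1 - T) * (1 - of_nat Q * T) \<noteq> 0" using n1 n2 by simp
    show ?thesis unfolding Zf_def powi_gm1[OF T0] powi_1mg[OF T0]
      by (rule alg2[OF T0 Tg X, symmetric])
  qed
  have Pp: "?P p"
  proof -
    have "\<forall>\<^sub>F T in cofinite. T \<notin> {0, 1, 1 / of_nat Q}" by (simp add: eventually_cofinite)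
    thus ?thesis using p by eventually_elim (use e in simp)
  qed
  have uniq: "p2 = p" if "?P p2" for p2
  proof (rule poly_cof_unique)
    show "\<forall>\<^sub>F T in cofinite. poly p2 T = poly p T" using that Pp by eventually_elim simp
  qed
  have "(THE p. ?P p) = p" by (rule the_equality[where P="?P", OF Pp uniq])
  thus ?thesis by (simp add: poly_0_coeff_0)
qed



lemma choose2_Suc: "Suc n choose 2 = (n choose 2) + n"
  by (simp add: numeral_2_eq_2)

theorem theorem2p7:
  fixes q g :: nat and P :: "int poly" and ms :: "nat list" and n :: nat
  assumes "curve_zeta_data q g P"
    and "\<forall>k\<in>set ms. k > 0"
    and "n > 0"
  shows "alpha_inv q g P (ms @ [n + 1]) =
           of_nat (q_tuple q ms) powi (int n * (int g - 1)) * alpha_inv q g P ms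
           * beta_inv q g P (ms @ [n])"
proof -
  define Q where "Q = q_tuple q ms"
  define Zr where "Zr = derived_zeta q g P ms"
  have "good Q g Zr" unfolding Q_def Zr_def by (rule good_derived[OF assms(1) assms(2)])
  then obtain p where Q2: "Q \<ge> 2" and p: "pfe Q g p" "\<forall>\<^sub>F T in cofinite. Zr T = Zf Q g p T"
    unfolding good_def by blast
  define S where "S N = (\<Sum>ks\<in>compositions N. comp_coeff Q (Zf Q g p) ks)" for N
  define C where "C N = (of_nat Q :: complex) powi (int (N choose 2) * (int g - 1))" for N
  have a_ms: "alpha_inv q g P ms = poly p 0"
    unfolding alpha_inv_def Q_def[symmetric] Zr_def[symmetric] by (rule alpha_good[OF Q2 p(2)])
  obtain p1 where p1: "\<forall>\<^sub>F z in cofinite. derive_zeta Q g (n + 1) (Zf Q g p) z = Zf (Q ^ (n + 1)) g p1 z"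
      "poly p1 0 = C (n + 1) * poly p 0 * S n"
    using step_global[OF Q2 _ p(1), of "n + 1"] unfolding C_def S_def by auto
  have "\<forall>\<^sub>F T in cofinite. derive_zeta Q g (n + 1) Zr T = derive_zeta Q g (n + 1) (Zf Q g p) T"
    by (rule derive_cong) (use Q2 p(2) in auto)
  hence ev1: "\<forall>\<^sub>F T in cofinite. derived_zeta q g P (ms @ [n + 1]) T = Zf (Q ^ (n + 1)) g p1 T"
    unfolding derived_snoc Q_def[symmetric] Zr_def[symmetric] using p1(1) by (rule cof_trans)
  have Q2': "Q ^ (n + 1) \<ge> 2"
  proof -
    have "Q \<le> Q ^ (n + 1)" using Q2 by (intro self_le_power) auto
    thus ?thesis using Q2 by linarith
  qed
  have a_msn: "alpha_inv q g P (ms @ [n + 1]) = C (n + 1) * poly p 0 * S n"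
    unfolding alpha_inv_def q_tuple_snoc Q_def[symmetric] alpha_good[OF Q2' ev1] p1(2) ..
  have res: "residue (derive_zeta Q g n (Zf Q g p)) 1 = C n * S n"
    using step_global[OF Q2 _ p(1), of n] assms(3) unfolding C_def S_def by auto
  have "\<forall>\<^sub>F T in cofinite. derive_zeta Q g n Zr T = derive_zeta Q g n (Zf Q g p) T"
    by (rule derive_cong) (use Q2 p(2) in auto)
  hence "residue (derive_zeta Q g n Zr) 1 = residue (derive_zeta Q g n (Zf Q g p)) 1"
    by (intro residue_cong cof_at) auto
  hence b: "beta_inv q g P (ms @ [n]) = C n * S n"
    unfolding beta_inv_def derived_snoc Q_def[symmetric] Zr_def[symmetric] res .
  have Cc: "C (n + 1) = of_nat Q powi (int n * (int g - 1)) * C n"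
  proof -
    have Q0: "(of_nat Q :: complex) \<noteq> 0" using Q2 by simp
    have "int ((n + 1) choose 2) * (int g - 1) = int n * (int g - 1) + int (n choose 2) * (int g - 1)"
      by (simp add: choose2_Suc algebra_simps)
    thus ?thesis unfolding C_def using Q0 by (simp add: power_int_add)
  qed
  show ?thesis unfolding a_msn a_ms b Q_def[symmetric] Cc by (simp add: ac_simps)
qed

end
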